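(* For any episodic tabular MDP as in the context, any non-negative mean rewards $r$ and any $L\in[H]$, let $t_L(h)=\max\{h-L+1,1\}$. Then $$\sup_{\mathcal D(r)}V^{L,*}(P,r)=\max_{\pi\in\Pi^{\mathcal M}}\sum_{(h,s,a)\in\mathcal X}r_h(s,a)\sum_{s'\in\mathcal S}d^{\pi}_{t_L(h)}(s')\,d_h^*(s\mid s_{t_L(h)}=s').$$
   Context: Episodic tabular MDP $(\mathcal S,\mathcal A,H,P,R,\mu)$: finite state space $\mathcal S$ with $|\mathcal S|=S$, finite action space $\mathcal A$ with $|\mathcal A|=A$, horizon $H\in\mathbb N$, transition kernels $P_h(\cdot\mid s,a)$, initial state distribution $\mu$, and random non-negative rewards $R_h(s,a)$ for $(h,s,a)\in\mathcal X:=[H]\times\mathcal S\times\mathcal A$. Initially $s_1\sim\mu$; at step $h$ the agent in state $s_h$ picks $a_h$, receives $R_h(s_h,a_h)$ and moves to $s_{h+1}\sim P_h(\cdot\mid s_h,a_h)$. All rewards are drawn before the interaction. The vectors $\mathcal R_h=\{R_h(s,a)\}_{s,a}$ for different $h$ are mutually independent (entries of one $\mathcal R_h$ may be arbitrarily correlated); rewards are independent of transitions, and transitions are independent across steps. Let $r_h(s,a)=\mathbb E[R_h(s,a)]$ and let $\mathcal D(r)$ denote the set of all such reward distributions with means $r$. For $L\in\{0,\dots,H\}$ an $L$-lookahead policy draws $a_h\sim\pi_h(\cdot\mid s_h,\mathcal R_h^L)$, where $\mathcal R_h^L=(\mathcal R_t)_{h\le t\le\min(h+L-1,H)}$ and $\mathcal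 R_h^0=\emptyset$; $\Pi^L$ is the set of these policies and $\Pi^{\mathcal M}=\Pi^0$ is the set of (possibly randomized) Markovian policies. The value is $V^{L,\pi}(P,r)=\mathbb E[\sum_{h=1}^H R_h(s_h,a_h)]$, and $V^{L,*}(P,r)=\sup_{\pi\in\Pi^L}V^{L,\pi}(P,r)$. Occupancy measures: $d_h^\pi(s)=\Pr(s_h=s)$ under $\pi$. For $t\le h$, $d_h^\pi(s\mid s_t=s')$ is the probability of being at $s$ at step $h$ when at $s'$ at step $t$ and following $\pi$, and $d_h^*(s\mid s_t=s')=\max_{\pi\in\Pi^{\mathcal M}}d_h^\pi(s\mid s_t=s')$. In particular $d_h^*(s\mid s_h=s')=\mathbb 1\{s=s'\}$. *)

theory Defs
  imports "HOL-Probability.Probability"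
begin

(* Conventions:
   steps are h \<in> {1..H}; states type 's::finite, actions type 'a::finite;
   P h s a s' = P_h(s' | s,a);  mu s = initial distribution;
   a reward table is a function R :: nat \<Rightarrow> 's \<Rightarrow> 'a \<Rightarrow> real, R h s a = R_h(s,a);
   a (randomized) decision rule  dec :: nat \<Rightarrow> 's \<Rightarrow> 'a \<Rightarrow> real  gives dec h s a = Pr(a_h = a | s_h = s). *)

text \<open>Distribution of the state at step t+k, starting from state distribution nu at step t
  and following the decision rule dec.\<close>
primrec flow :: "(nat \<Rightarrow> 's::finite \<Rightarrow> 'a::finite \<Rightarrow> 's \<Rightarrow> real) \<Rightarrow> (nat \<Rightarrow> 's \<Rightarrow> 'a \<Rightarrow> real)
    \<Rightarrow> nat \<Rightarrow> ('s \<Rightarrow> real) \<Rightarrow> nat \<Rightarrow> 's \<Rightarrow> real" where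
  "flow P dec t nu 0 = nu"
| "flow P dec t nu (Suc k) =
     (\<lambda>s'. \<Sum>s\<in>UNIV. \<Sum>a\<in>UNIV. flow P dec t nu k s * dec (t + k) s a * P (t + k) s a s')"

definition markov_policy :: "nat \<Rightarrow> (nat \<Rightarrow> 's::finite \<Rightarrow> 'a::finite \<Rightarrow> real) \<Rightarrow> bool" where
  "markov_policy H \<pi> \<longleftrightarrow>
     (\<forall>h\<in>{1..H}. \<forall>s. (\<forall>a. 0 \<le> \<pi> h s a) \<and> (\<Sum>a\<in>UNIV. \<pi> h s a) = 1)"

text \<open>Occupancy measure d_h^pi(s) = Pr(s_h = s).\<close>
definition occ :: "(nat \<Rightarrow> 's::finite \<Rightarrow> 'a::finite \<Rightarrow> 's \<Rightarrow> real) \<Rightarrow> ('s \<Rightarrow> real)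
    \<Rightarrow> (nat \<Rightarrow> 's \<Rightarrow> 'a \<Rightarrow> real) \<Rightarrow> nat \<Rightarrow> 's \<Rightarrow> real" where
  "occ P mu \<pi> h s = flow P \<pi> 1 mu (h - 1) s"

text \<open>Conditional occupancy d_h^pi(s | s_t = s'), for t \<le> h.\<close>
definition cocc :: "(nat \<Rightarrow> 's::finite \<Rightarrow> 'a::finite \<Rightarrow> 's \<Rightarrow> real)
    \<Rightarrow> (nat \<Rightarrow> 's \<Rightarrow> 'a \<Rightarrow> real) \<Rightarrow> nat \<Rightarrow> 's \<Rightarrow> nat \<Rightarrow> 's \<Rightarrow> real" where
  "cocc P \<pi> t s' h s = flow P \<pi> t (\<lambda>x. if x = s' then 1 else 0) (h - t) s"

text \<open>d_h^*(s | s_t = s') = max over Markovian policies (written as Sup; the max is attained).\<close>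
definition dstar :: "(nat \<Rightarrow> 's::finite \<Rightarrow> 'a::finite \<Rightarrow> 's \<Rightarrow> real) \<Rightarrow> nat
    \<Rightarrow> nat \<Rightarrow> 's \<Rightarrow> nat \<Rightarrow> 's \<Rightarrow> real" where
  "dstar P H t s' h s = Sup {cocc P \<pi> t s' h s | \<pi>. markov_policy H \<pi>}"

text \<open>Lookahead window R_h^L = (R_t)_{h \<le> t \<le> min(h+L-1,H)}; entries outside are masked by 0.\<close>
definition window :: "nat \<Rightarrow> nat \<Rightarrow> nat \<Rightarrow> (nat \<Rightarrow> 's \<Rightarrow> 'a \<Rightarrow> real) \<Rightarrow> (nat \<Rightarrow> 's \<Rightarrow> 'a \<Rightarrow> real)" where
  "window L H h R = (\<lambda>t. if h \<le> t \<and> t \<le> min (h + L - 1) H then R t else (\<lambda>_ _. 0))"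

text \<open>Joint law of the reward tables (R_1,...,R_H): independent across steps,
  with step-h law D h (a law on the whole vector R_h, arbitrary correlations inside).\<close>
definition reward_law :: "nat \<Rightarrow> (nat \<Rightarrow> ('s \<Rightarrow> 'a \<Rightarrow> real) measure) \<Rightarrow> (nat \<Rightarrow> 's \<Rightarrow> 'a \<Rightarrow> real) measure" where
  "reward_law H D = PiM {1..H} D"

definition reward_dists :: "nat \<Rightarrow> (nat \<Rightarrow> 's::finite \<Rightarrow> 'a::finite \<Rightarrow> real)
    \<Rightarrow> (nat \<Rightarrow> ('s \<Rightarrow> 'a \<Rightarrow> real) measure) set" where
  "reward_dists H r = {D. \<forall>h\<in>{1..H}. prob_space (D h) \<and> sets (D h) = sets borel \<and>
      (AE R in D h. \<forall>s a. 0 \<le> R s a) \<and>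
      (\<forall>s a. integrable (D h) (\<lambda>R. R s a) \<and> (\<integral>R. R s a \<partial>D h) = r h s a)}"

text \<open>L-lookahead policies: pol h s W a = pi_h(a | s, W), applied to W = R_h^L;
  measurability in the rewards is required so that the value is well defined.\<close>
definition lookahead_policies :: "nat \<Rightarrow> nat \<Rightarrow> (nat \<Rightarrow> ('s::finite \<Rightarrow> 'a::finite \<Rightarrow> real) measure)
    \<Rightarrow> (nat \<Rightarrow> 's \<Rightarrow> (nat \<Rightarrow> 's \<Rightarrow> 'a \<Rightarrow> real) \<Rightarrow> 'a \<Rightarrow> real) set" where
  "lookahead_policies H L D = {pol.
      (\<forall>h\<in>{1..H}. \<forall>s W. (\<forall>a. 0 \<le> pol h s W a) \<and> (\<Sum>a\<in>UNIV. pol h s W a) = 1) \<and>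
      (\<forall>h\<in>{1..H}. \<forall>s a. (\<lambda>R. pol h s (window L H h R) a) \<in> borel_measurable (reward_law H D))}"

text \<open>V^{L,pi}(P,r) = E[ sum_h R_h(s_h,a_h) ]: conditionally on the reward realisation R,
  the expected reward collected is computed via the state distributions at each step.\<close>
definition lookahead_value :: "(nat \<Rightarrow> 's::finite \<Rightarrow> 'a::finite \<Rightarrow> 's \<Rightarrow> real) \<Rightarrow> ('s \<Rightarrow> real)
    \<Rightarrow> nat \<Rightarrow> nat \<Rightarrow> (nat \<Rightarrow> ('s \<Rightarrow> 'a \<Rightarrow> real) measure)
    \<Rightarrow> (nat \<Rightarrow> 's \<Rightarrow> (nat \<Rightarrow> 's \<Rightarrow> 'a \<Rightarrow> real) \<Rightarrow> 'a \<Rightarrow> real) \<Rightarrow> real" where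
  "lookahead_value P mu H L D pol =
     (\<integral>R. (let dec = (\<lambda>h s. pol h s (window L H h R)) in
            \<Sum>h\<in>{1..H}. \<Sum>s\<in>UNIV. \<Sum>a\<in>UNIV. flow P dec 1 mu (h - 1) s * dec h s a * R h s a)
        \<partial>reward_law H D)"

definition opt_lookahead_value :: "(nat \<Rightarrow> 's::finite \<Rightarrow> 'a::finite \<Rightarrow> 's \<Rightarrow> real) \<Rightarrow> ('s \<Rightarrow> real)
    \<Rightarrow> nat \<Rightarrow> nat \<Rightarrow> (nat \<Rightarrow> ('s \<Rightarrow> 'a \<Rightarrow> real) measure) \<Rightarrow> ereal" where
  "opt_lookahead_value P mu H L D =
     (SUP pol\<in>lookahead_policies H L D. ereal (lookahead_value P mu H L D pol))"

definition tL :: "nat \<Rightarrow> nat \<Rightarrow> nat" where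
  "tL L h = max (h + 1 - L) 1"

end

theory Submission
  imports Defs
begin

definition qv :: "(nat \<Rightarrow> 's::finite \<Rightarrow> 'a::finite \<Rightarrow> 's \<Rightarrow> real) \<Rightarrow> nat \<Rightarrow> ('s \<Rightarrow> real) \<Rightarrow> 's \<Rightarrow> 'a \<Rightarrow> real" where
  "qv P k V x a = (\<Sum>y\<in>UNIV. P k x a y * V y)"

definition gact :: "(nat \<Rightarrow> 's::finite \<Rightarrow> 'a::finite \<Rightarrow> 's \<Rightarrow> real) \<Rightarrow> nat \<Rightarrow> ('s \<Rightarrow> real) \<Rightarrow> 's \<Rightarrow> 'a" where
  "gact P k V x = (SOME a. \<forall>b. qv P k V x b \<le> qv P k V x a)"

definition Qm :: "(nat \<Rightarrow> 's::finite \<Rightarrow> 'a::finite \<Rightarrow> 's \<Rightarrow> real) \<Rightarrow> nat \<Rightarrow> ('s \<Rightarrow> real) \<Rightarrow> 's \<Rightarrow> real" where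
  "Qm P k V x = qv P k V x (gact P k V x)"

lemma gact_max: "qv P k V x b \<le> Qm P k V x"
proof -
  let ?f = "qv P k V x"
  have "finite (range ?f)" by simp
  then have "Max (range ?f) \<in> range ?f" by (intro Max_in) auto
  then obtain a where a: "?f a = Max (range ?f)" by (metis rangeE)
  have "\<forall>b. ?f b \<le> ?f a" using a by (simp add: \<open>finite (range ?f)\<close>)
  then have "\<forall>b. ?f b \<le> ?f (gact P k V x)" unfolding gact_def by (rule someI)
  then show ?thesis unfolding Qm_def by blast
qed

lemma sum3_swap:
  "(\<Sum>x\<in>A. \<Sum>y\<in>B. \<Sum>z\<in>C. f x y z) = (\<Sum>y\<in>B. \<Sum>z\<in>C. \<Sum>x\<in>A. f x y z)"
proof -
  have "(\<Sum>x\<in>A. \<Sum>y\<in>B. \<Sum>z\<in>C. f x y z) = (\<Sum>y\<in>B. \<Sum>x\<in>A. \<Sum>z\<in>C. f x y z)"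
    by (rule sum.swap)
  also have "\<dots> = (\<Sum>y\<in>B. \<Sum>z\<in>C. \<Sum>x\<in>A. f x y z)"
    by (intro sum.cong refl sum.swap)
  finally show ?thesis .
qed

lemma flow_cong:
  assumes "\<And>k. k < n \<Longrightarrow> dec (t+k) = dec' (t+k)"
  shows "flow P dec t \<nu> n = flow P dec' t \<nu> n"
  using assms by (induction n) auto

lemma flow_nonneg:
  assumes "\<And>s. 0 \<le> \<nu> s"
    and "\<And>k s a. k < n \<Longrightarrow> 0 \<le> dec (t+k) s a"
    and "\<And>k s a s'. k < n \<Longrightarrow> 0 \<le> P (t+k) s a s'"
  shows "0 \<le> flow P dec t \<nu> n s"
  using assms by (induction n arbitrary: s) (auto intro!: sum_nonneg mult_nonneg_nonneg)

lemma flow_sum: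
  assumes "\<And>k s. k < n \<Longrightarrow> (\<Sum>a\<in>UNIV. dec (t+k) s a) = 1"
    and "\<And>k s a. k < n \<Longrightarrow> (\<Sum>s'\<in>UNIV. P (t+k) s a s') = 1"
  shows "(\<Sum>s\<in>UNIV. flow P dec t \<nu> n s) = (\<Sum>s\<in>UNIV. \<nu> s)"
  using assms
proof (induction n)
  case 0 then show ?case by simp
next
  case (Suc n)
  have "(\<Sum>s'\<in>UNIV. flow P dec t \<nu> (Suc n) s') =
     (\<Sum>s\<in>UNIV. \<Sum>a\<in>UNIV. flow P dec t \<nu> n s * dec (t + n) s a * (\<Sum>s'\<in>UNIV. P (t + n) s a s'))"
    (is "?L = ?R")
  proof -
    have "?L = (\<Sum>s'\<in>UNIV. \<Sum>s\<in>UNIV. \<Sum>a\<in>UNIV. flow P dec t \<nu> n s * dec (t + n) s a * P (t + n) s a s')"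
      by simp
    also have "\<dots> = (\<Sum>s\<in>UNIV. \<Sum>a\<in>UNIV. \<Sum>s'\<in>UNIV. flow P dec t \<nu> n s * dec (t + n) s a * P (t + n) s a s')"
      by (rule sum3_swap)
    also have "\<dots> = ?R" by (simp add: sum_distrib_left)
    finally show ?thesis .
  qed
  also have "\<dots> = (\<Sum>s\<in>UNIV. flow P dec t \<nu> n s * (\<Sum>a\<in>UNIV. dec (t + n) s a))"
    using Suc.prems(2)[of n] by (simp add: sum_distrib_left[symmetric])
  also have "\<dots> = (\<Sum>s\<in>UNIV. flow P dec t \<nu> n s)"
    using Suc.prems(1)[of n] by simp
  finally show ?case using Suc by simp
qed

lemma flow_add: "flow P dec t \<nu> (m + n) = flow P dec (t + m) (flow P dec t \<nu> m) n"
  by (induction n) (auto simp: add.assoc)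

lemma flow_linear:
  "flow P dec t \<nu> n s = (\<Sum>x\<in>UNIV. \<nu> x * flow P dec t (\<lambda>y. if y = x then 1 else 0) n s)"
proof (induction n arbitrary: s)
  case 0 then show ?case by (simp add: if_distrib cong: if_cong)
next
  case (Suc n)
  show ?case
  proof -
    let ?d = "\<lambda>x. (\<lambda>y. if y = x then 1 else (0::real))"
    have "flow P dec t \<nu> (Suc n) s = (\<Sum>s0\<in>UNIV. \<Sum>a\<in>UNIV. \<Sum>x\<in>UNIV. \<nu> x * (flow P dec t (?d x) n s0 * dec (t + n) s0 a * P (t + n) s0 a s))"
      by (simp add: Suc sum_distrib_right mult.assoc)
    also have "\<dots> = (\<Sum>x\<in>UNIV. \<Sum>s0\<in>UNIV. \<Sum>a\<in>UNIV. \<nu> x * (flow P dec t (?d x) n s0 * dec (t + n) s0 a * P (t + n) s0 a s))"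
      by (rule sum3_swap[symmetric])
    also have "\<dots> = (\<Sum>x\<in>UNIV. \<nu> x * flow P dec t (?d x) (Suc n) s)"
      by (simp add: sum_distrib_left)
    finally show ?case .
  qed
qed

lemma flow_step_sum:
  "(\<Sum>x\<in>UNIV. flow P dec t \<nu> (Suc n) x * V x) =
   (\<Sum>x\<in>UNIV. flow P dec t \<nu> n x * (\<Sum>a\<in>UNIV. dec (t+n) x a * qv P (t+n) V x a))"
  (is "?L = ?R")
proof -
  have "?L = (\<Sum>x\<in>UNIV. \<Sum>s\<in>UNIV. \<Sum>a\<in>UNIV. flow P dec t \<nu> n s * dec (t + n) s a * (P (t + n) s a x * V x))"
    by (simp add: sum_distrib_right mult.assoc)
  also have "\<dots> = (\<Sum>s\<in>UNIV. \<Sum>a\<in>UNIV. \<Sum>x\<in>UNIV. flow P dec t \<nu> n s * dec (t + n) s a * (P (t + n) s a x * V x))"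
    by (rule sum3_swap)
  also have "\<dots> = ?R" by (simp add: qv_def sum_distrib_left mult.assoc)
  finally show ?thesis .
qed

lemma flow_step_le:
  assumes "\<And>x a. 0 \<le> dec (t+n) x a" "\<And>x. (\<Sum>a\<in>UNIV. dec (t+n) x a) = 1"
    and "\<And>x. 0 \<le> flow P dec t \<nu> n x"
  shows "(\<Sum>x\<in>UNIV. flow P dec t \<nu> (Suc n) x * V x) \<le> (\<Sum>x\<in>UNIV. flow P dec t \<nu> n x * Qm P (t+n) V x)"
  unfolding flow_step_sum
proof (rule sum_mono, rule mult_left_mono)
  fix x
  have "(\<Sum>a\<in>UNIV. dec (t+n) x a * qv P (t+n) V x a) \<le> (\<Sum>a\<in>UNIV. dec (t+n) x a * Qm P (t+n) V x)"
    by (intro sum_mono mult_left_mono gact_max assms)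
  also have "\<dots> = Qm P (t+n) V x" using assms(2)[of x] by (simp add: sum_distrib_right[symmetric])
  finally show "(\<Sum>a\<in>UNIV. dec (t+n) x a * qv P (t+n) V x a) \<le> Qm P (t+n) V x" .
qed (use assms in auto)

lemma flow_step_eq:
  assumes "\<And>x a. dec (t+n) x a = (if a = gact P (t+n) V x then 1 else 0)"
  shows "(\<Sum>x\<in>UNIV. flow P dec t \<nu> (Suc n) x * V x) = (\<Sum>x\<in>UNIV. flow P dec t \<nu> n x * Qm P (t+n) V x)"
  unfolding flow_step_sum assms Qm_def
proof (rule sum.cong[OF refl])
  fix x
  have "(\<Sum>a\<in>UNIV. (if a = gact P (t + n) V x then 1 else 0) * qv P (t + n) V x a)
     = (\<Sum>a\<in>UNIV. (if a = gact P (t + n) V x then qv P (t + n) V x a else 0))"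
    by (rule sum.cong) auto
  also have "\<dots> = qv P (t + n) V x (gact P (t + n) V x)" by simp
  finally show "flow P dec t \<nu> n x * (\<Sum>a\<in>UNIV. (if a = gact P (t + n) V x then 1 else 0) * qv P (t + n) V x a) =
         flow P dec t \<nu> n x * qv P (t + n) V x (gact P (t + n) V x)" by simp
qed



fun Ur :: "(nat \<Rightarrow> 's::finite \<Rightarrow> 'a::finite \<Rightarrow> 's \<Rightarrow> real) \<Rightarrow> nat \<Rightarrow> 's \<Rightarrow> nat \<Rightarrow> 's \<Rightarrow> real" where
  "Ur P h s 0 = (\<lambda>x. if x = s then 1 else 0)"
| "Ur P h s (Suc m) = Qm P (h - Suc m) (Ur P h s m)"

definition rho :: "(nat \<Rightarrow> 's::finite \<Rightarrow> 'a::finite \<Rightarrow> 's \<Rightarrow> real) \<Rightarrow> nat \<Rightarrow> 's \<Rightarrow> nat \<Rightarrow> 's \<Rightarrow> 'a \<Rightarrow> real" where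
  "rho P h s k x a = (if a = gact P k (Ur P h s (h - Suc k)) x then 1 else 0)"

lemma det_dist: "(\<Sum>a\<in>UNIV. (if a = (b::'a::finite) then 1 else (0::real))) = 1"
  by simp

lemma markov_rho: "markov_policy H (rho P h s)"
  unfolding markov_policy_def rho_def by simp

lemma reach_le:
  assumes "t + n + m = h" "\<And>x. 0 \<le> \<nu> x"
    and dist: "\<And>k x a. k < n \<Longrightarrow> 0 \<le> \<pi> (t+k) x a" "\<And>k x. k < n \<Longrightarrow> (\<Sum>a\<in>UNIV. \<pi> (t+k) x a) = 1"
    and Pn: "\<And>k x a y. k < n \<Longrightarrow> 0 \<le> P (t+k) x a y"
  shows "(\<Sum>x\<in>UNIV. flow P \<pi> t \<nu> n x * Ur P h s m x) \<le> (\<Sum>x\<in>UNIV. \<nu> x * Ur P h s (n + m) x)"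
  using assms
proof (induction n arbitrary: m)
  case 0 then show ?case by simp
next
  case (Suc n)
  have fnn: "0 \<le> flow P \<pi> t \<nu> n x" for x
    by (rule flow_nonneg) (use Suc.prems in auto)
  have "(\<Sum>x\<in>UNIV. flow P \<pi> t \<nu> (Suc n) x * Ur P h s m x) \<le> (\<Sum>x\<in>UNIV. flow P \<pi> t \<nu> n x * Qm P (t+n) (Ur P h s m) x)"
    by (rule flow_step_le) (use Suc.prems fnn in auto)
  also have "Qm P (t+n) (Ur P h s m) = Ur P h s (Suc m)"
  proof -
    have hm: "h - Suc m = t + n" using Suc.prems by auto
    then show ?thesis by simp
  qed
  also have "(\<Sum>x\<in>UNIV. flow P \<pi> t \<nu> n x * Ur P h s (Suc m) x) \<le> (\<Sum>x\<in>UNIV. \<nu> x * Ur P h s (n + Suc m) x)"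
    by (rule Suc.IH) (use Suc.prems in auto)
  finally show ?case by simp
qed

lemma reach_eq:
  assumes "t + n + m = h"
  shows "(\<Sum>x\<in>UNIV. flow P (rho P h s) t \<nu> n x * Ur P h s m x) = (\<Sum>x\<in>UNIV. \<nu> x * Ur P h s (n + m) x)"
  using assms
proof (induction n arbitrary: m)
  case 0 then show ?case by simp
next
  case (Suc n)
  have hm: "h - Suc (t + n) = m" "h - Suc m = t + n" using Suc.prems by auto
  have "(\<Sum>x\<in>UNIV. flow P (rho P h s) t \<nu> (Suc n) x * Ur P h s m x) = (\<Sum>x\<in>UNIV. flow P (rho P h s) t \<nu> n x * Qm P (t+n) (Ur P h s m) x)"
    by (rule flow_step_eq) (simp add: rho_def hm)
  also have "Qm P (t+n) (Ur P h s m) = Ur P h s (Suc m)"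
    using hm by simp
  also have "(\<Sum>x\<in>UNIV. flow P (rho P h s) t \<nu> n x * Ur P h s (Suc m) x) = (\<Sum>x\<in>UNIV. \<nu> x * Ur P h s (n + Suc m) x)"
    by (rule Suc.IH) (use Suc.prems in auto)
  finally show ?case by simp
qed

lemma sum_delta_mult: "(\<Sum>x\<in>UNIV. f x * (if x = s then 1 else (0::real))) = f (s::'s::finite)"
  by (simp add: if_distrib cong: if_cong)

lemma sum_delta_mult': "(\<Sum>x\<in>UNIV. (if x = s then 1 else (0::real)) * f x) = f (s::'s::finite)"
proof -
  have "(\<Sum>x\<in>UNIV. (if x = s then 1 else (0::real)) * f x) = (\<Sum>x\<in>UNIV. if x = s then f x else 0)"
    by (rule sum.cong) auto
  then show ?thesis by simp
qed

lemma cocc_le: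
  assumes "1 \<le> t" "t \<le> h" "h \<le> H" "markov_policy H \<pi>"
    and P_nonneg: "\<forall>h\<in>{1..H}. \<forall>s a s'. 0 \<le> P h s a s'"
  shows "cocc P \<pi> t s' h s \<le> Ur P h s (h - t) s'"
proof -
  have "cocc P \<pi> t s' h s = (\<Sum>x\<in>UNIV. flow P \<pi> t (\<lambda>y. if y = s' then 1 else 0) (h - t) x * Ur P h s 0 x)"
    by (simp add: cocc_def sum_delta_mult)
  also have "\<dots> \<le> (\<Sum>x\<in>UNIV. (\<lambda>y. if y = s' then 1 else 0) x * Ur P h s (h - t + 0) x)"
  proof (rule reach_le)
    show "t + (h - t) + 0 = h" using assms by simp
    show "0 \<le> (if x = s' then 1 else (0::real))" for x by simp
    have kr: "t + k \<in> {1..H}" if "k < h - t" for k using assms that by auto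
    show "0 \<le> \<pi> (t + k) x a" if "k < h - t" for k x a
      using kr[OF that] assms(4) unfolding markov_policy_def by blast
    show "(\<Sum>a\<in>UNIV. \<pi> (t + k) x a) = 1" if "k < h - t" for k x
      using kr[OF that] assms(4) unfolding markov_policy_def by blast
    show "0 \<le> P (t + k) x a y" if "k < h - t" for k x a y
      using kr[OF that] P_nonneg by blast
  qed
  also have "\<dots> = Ur P h s (h - t) s'" by (simp add: sum_delta_mult')
  finally show ?thesis .
qed

lemma cocc_rho:
  assumes "t \<le> h"
  shows "cocc P (rho P h s) t s' h s = Ur P h s (h - t) s'"
proof -
  have "cocc P (rho P h s) t s' h s = (\<Sum>x\<in>UNIV. flow P (rho P h s) t (\<lambda>y. if y = s' then 1 else 0) (h - t) x * Ur P h s 0 x)"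
    by (simp add: cocc_def sum_delta_mult)
  also have "\<dots> = (\<Sum>x\<in>UNIV. (\<lambda>y. if y = s' then 1 else 0) x * Ur P h s (h - t + 0) x)"
    by (rule reach_eq) (use assms in auto)
  also have "\<dots> = Ur P h s (h - t) s'" by (simp add: sum_delta_mult')
  finally show ?thesis .
qed

lemma dstar_eq:
  assumes "1 \<le> t" "t \<le> h" "h \<le> H"
    and P_nonneg: "\<forall>h\<in>{1..H}. \<forall>s a s'. 0 \<le> P h s a s'"
  shows "dstar P H t s' h s = Ur P h s (h - t) s'"
  unfolding dstar_def
proof (rule cSup_eq_maximum)
  show "Ur P h s (h - t) s' \<in> {cocc P \<pi> t s' h s |\<pi>. markov_policy H \<pi>}"
    using cocc_rho[OF assms(2), of P s s', symmetric] markov_rho[of H P h s] by blast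
  show "x \<le> Ur P h s (h - t) s'" if hx: "x \<in> {cocc P \<pi> t s' h s |\<pi>. markov_policy H \<pi>}" for x
  proof -
    obtain \<pi> where "x = cocc P \<pi> t s' h s" "markov_policy H \<pi>" using hx by blast
    then show ?thesis using cocc_le[OF assms(1-3) _ P_nonneg] by blast
  qed
qed

lemma dstar_cocc:
  assumes "1 \<le> t" "t \<le> h" "h \<le> H" "markov_policy H \<pi>"
    and P_nonneg: "\<forall>h\<in>{1..H}. \<forall>s a s'. 0 \<le> P h s a s'"
  shows "cocc P \<pi> t s' h s \<le> dstar P H t s' h s"
  using cocc_le[OF assms] dstar_eq[OF assms(1-3) P_nonneg] by simp

lemma dstar_nonneg:
  assumes "1 \<le> t" "t \<le> h" "h \<le> H"
    and P_nonneg: "\<forall>h\<in>{1..H}. \<forall>s a s'. 0 \<le> P h s a s'"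
  shows "0 \<le> dstar P H t s' h s"
proof -
  have "0 \<le> cocc P (rho P h s) t s' h s"
    unfolding cocc_def by (rule flow_nonneg) (use assms in \<open>auto simp: rho_def\<close>)
  then show ?thesis by (rule order_trans[OF _ dstar_cocc[OF assms(1-3) markov_rho P_nonneg]])
qed



fun Vd :: "(nat \<Rightarrow> 's::finite \<Rightarrow> 'a::finite \<Rightarrow> 's \<Rightarrow> real) \<Rightarrow> nat \<Rightarrow> (nat \<Rightarrow> 's \<Rightarrow> real) \<Rightarrow> nat \<Rightarrow> 's \<Rightarrow> real" where
  "Vd P H g 0 = (\<lambda>x. 0)"
| "Vd P H g (Suc m) = (\<lambda>x. g (H - m) x + Qm P (H - m) (Vd P H g m) x)"

definition pistar :: "(nat \<Rightarrow> 's::finite \<Rightarrow> 'a::finite \<Rightarrow> 's \<Rightarrow> real) \<Rightarrow> nat \<Rightarrow> (nat \<Rightarrow> 's \<Rightarrow> real) \<Rightarrow> nat \<Rightarrow> 's \<Rightarrow> 'a \<Rightarrow> real" where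
  "pistar P H g k x a = (if a = gact P k (Vd P H g (H - k)) x then 1 else 0)"

lemma markov_pistar: "markov_policy H (pistar P H g)"
  unfolding markov_policy_def pistar_def by simp

lemma markov_nn: "markov_policy H \<pi> \<Longrightarrow> k \<in> {1..H} \<Longrightarrow> 0 \<le> \<pi> k x a"
  unfolding markov_policy_def by blast
lemma markov_sum: "markov_policy H \<pi> \<Longrightarrow> k \<in> {1..H} \<Longrightarrow> (\<Sum>a\<in>UNIV. \<pi> k x a) = 1"
  unfolding markov_policy_def by blast

lemma obj_le:
  assumes "n \<le> H" "markov_policy H \<pi>" "\<And>x. 0 \<le> mu x"
    and P_nonneg: "\<forall>h\<in>{1..H}. \<forall>s a s'. 0 \<le> P h s a s'"
  shows "(\<Sum>t\<in>{1..n}. \<Sum>x\<in>UNIV. flow P \<pi> 1 mu (t - 1) x * g t x) + (\<Sum>x\<in>UNIV. flow P \<pi> 1 mu n x * Vd P H g (H - n) x)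
     \<le> (\<Sum>x\<in>UNIV. mu x * Vd P H g H x)"
  using assms(1)
proof (induction n)
  case 0 then show ?case by simp
next
  case (Suc n)
  have fnn: "0 \<le> flow P \<pi> 1 mu n x" for x
  proof (rule flow_nonneg)
    show "0 \<le> mu s" for s using assms(3) .
    show "0 \<le> \<pi> (1 + k) s a" if "k < n" for k s a using markov_nn[OF assms(2)] that Suc.prems by simp
    show "0 \<le> P (1 + k) s a s'" if "k < n" for k s a s' using P_nonneg that Suc.prems by simp
  qed
  have e: "H - n = Suc (H - Suc n)" "H - (H - Suc n) = Suc n" using Suc.prems by auto
  have "(\<Sum>x\<in>UNIV. flow P \<pi> 1 mu (Suc n) x * Vd P H g (H - Suc n) x) \<le> (\<Sum>x\<in>UNIV. flow P \<pi> 1 mu n x * Qm P (1+n) (Vd P H g (H - Suc n)) x)"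
  proof (rule flow_step_le)
    show "0 \<le> \<pi> (1 + n) x a" for x a using markov_nn[OF assms(2)] Suc.prems by simp
    show "(\<Sum>a\<in>UNIV. \<pi> (1 + n) x a) = 1" for x using markov_sum[OF assms(2)] Suc.prems by simp
  qed (rule fnn)
  then have "(\<Sum>t\<in>{1..Suc n}. \<Sum>x\<in>UNIV. flow P \<pi> 1 mu (t - 1) x * g t x) + (\<Sum>x\<in>UNIV. flow P \<pi> 1 mu (Suc n) x * Vd P H g (H - Suc n) x)
     \<le> (\<Sum>t\<in>{1..n}. \<Sum>x\<in>UNIV. flow P \<pi> 1 mu (t - 1) x * g t x) + ((\<Sum>x\<in>UNIV. flow P \<pi> 1 mu n x * g (Suc n) x) + (\<Sum>x\<in>UNIV. flow P \<pi> 1 mu n x * Qm P (1+n) (Vd P H g (H - Suc n)) x))"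
    by simp
  also have "(\<Sum>x\<in>UNIV. flow P \<pi> 1 mu n x * g (Suc n) x) + (\<Sum>x\<in>UNIV. flow P \<pi> 1 mu n x * Qm P (1+n) (Vd P H g (H - Suc n)) x)
     = (\<Sum>x\<in>UNIV. flow P \<pi> 1 mu n x * Vd P H g (H - n) x)"
    unfolding e by (simp add: e sum.distrib[symmetric] distrib_left)
  also have "(\<Sum>t\<in>{1..n}. \<Sum>x\<in>UNIV. flow P \<pi> 1 mu (t - 1) x * g t x) + \<dots> \<le> (\<Sum>x\<in>UNIV. mu x * Vd P H g H x)"
    using Suc by simp
  finally show ?case .
qed

lemma obj_eq:
  assumes "n \<le> H"
  shows "(\<Sum>t\<in>{1..n}. \<Sum>x\<in>UNIV. flow P (pistar P H g) 1 mu (t - 1) x * g t x) + (\<Sum>x\<in>UNIV. flow P (pistar P H g) 1 mu n x * Vd P H g (H - n) x)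
     = (\<Sum>x\<in>UNIV. mu x * Vd P H g H x)"
  using assms
proof (induction n)
  case 0 then show ?case by simp
next
  case (Suc n)
  have e: "H - n = Suc (H - Suc n)" "H - (H - Suc n) = Suc n" using Suc.prems by auto
  have "(\<Sum>x\<in>UNIV. flow P (pistar P H g) 1 mu (Suc n) x * Vd P H g (H - Suc n) x) = (\<Sum>x\<in>UNIV. flow P (pistar P H g) 1 mu n x * Qm P (1+n) (Vd P H g (H - Suc n)) x)"
    by (rule flow_step_eq) (simp add: pistar_def)
  then have "(\<Sum>t\<in>{1..Suc n}. \<Sum>x\<in>UNIV. flow P (pistar P H g) 1 mu (t - 1) x * g t x) + (\<Sum>x\<in>UNIV. flow P (pistar P H g) 1 mu (Suc n) x * Vd P H g (H - Suc n) x)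
     = (\<Sum>t\<in>{1..n}. \<Sum>x\<in>UNIV. flow P (pistar P H g) 1 mu (t - 1) x * g t x) + ((\<Sum>x\<in>UNIV. flow P (pistar P H g) 1 mu n x * g (Suc n) x) + (\<Sum>x\<in>UNIV. flow P (pistar P H g) 1 mu n x * Qm P (1+n) (Vd P H g (H - Suc n)) x))"
    by simp
  also have "(\<Sum>x\<in>UNIV. flow P (pistar P H g) 1 mu n x * g (Suc n) x) + (\<Sum>x\<in>UNIV. flow P (pistar P H g) 1 mu n x * Qm P (1+n) (Vd P H g (H - Suc n)) x)
     = (\<Sum>x\<in>UNIV. flow P (pistar P H g) 1 mu n x * Vd P H g (H - n) x)"
    unfolding e by (simp add: e sum.distrib[symmetric] distrib_left)
  also have "(\<Sum>t\<in>{1..n}. \<Sum>x\<in>UNIV. flow P (pistar P H g) 1 mu (t - 1) x * g t x) + \<dots> = (\<Sum>x\<in>UNIV. mu x * Vd P H g H x)"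
    using Suc by simp
  finally show ?case .
qed



definition Jv :: "(nat \<Rightarrow> 's::finite \<Rightarrow> 'a::finite \<Rightarrow> 's \<Rightarrow> real) \<Rightarrow> ('s \<Rightarrow> real) \<Rightarrow> nat \<Rightarrow> nat \<Rightarrow> (nat \<Rightarrow> 's \<Rightarrow> 'a \<Rightarrow> real) \<Rightarrow> (nat \<Rightarrow> 's \<Rightarrow> 'a \<Rightarrow> real) \<Rightarrow> real" where
  "Jv P mu H L r \<pi> = (\<Sum>h\<in>{1..H}. \<Sum>s\<in>UNIV. \<Sum>a\<in>UNIV. r h s a *
          (\<Sum>s'\<in>UNIV. occ P mu \<pi> (tL L h) s' * dstar P H (tL L h) s' h s))"

definition cfun :: "(nat \<Rightarrow> 's::finite \<Rightarrow> 'a::finite \<Rightarrow> 's \<Rightarrow> real) \<Rightarrow> nat \<Rightarrow> nat \<Rightarrow> (nat \<Rightarrow> 's \<Rightarrow> 'a \<Rightarrow> real) \<Rightarrow> nat \<Rightarrow> 's \<Rightarrow> real" where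
  "cfun P H L r h x = (\<Sum>s\<in>UNIV. \<Sum>a\<in>UNIV. r h s a * dstar P H (tL L h) x h s)"

definition gfun :: "(nat \<Rightarrow> 's::finite \<Rightarrow> 'a::finite \<Rightarrow> 's \<Rightarrow> real) \<Rightarrow> nat \<Rightarrow> nat \<Rightarrow> (nat \<Rightarrow> 's \<Rightarrow> 'a \<Rightarrow> real) \<Rightarrow> nat \<Rightarrow> 's \<Rightarrow> real" where
  "gfun P H L r t x = (\<Sum>h\<in>{h\<in>{1..H}. tL L h = t}. cfun P H L r h x)"

lemma tL_range: "1 \<le> L \<Longrightarrow> h \<in> {1..H} \<Longrightarrow> tL L h \<in> {1..H}" "1 \<le> L \<Longrightarrow> 1 \<le> h \<Longrightarrow> tL L h \<le> h" "1 \<le> tL L h"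
  unfolding tL_def by auto

lemma Jv_eq1: "Jv P mu H L r \<pi> = (\<Sum>h\<in>{1..H}. \<Sum>x\<in>UNIV. occ P mu \<pi> (tL L h) x * cfun P H L r h x)"
  unfolding Jv_def
proof (rule sum.cong[OF refl])
  fix h
  have "(\<Sum>s\<in>UNIV. \<Sum>a\<in>UNIV. r h s a * (\<Sum>s'\<in>UNIV. occ P mu \<pi> (tL L h) s' * dstar P H (tL L h) s' h s))
      = (\<Sum>s\<in>UNIV. \<Sum>a\<in>UNIV. \<Sum>s'\<in>UNIV. occ P mu \<pi> (tL L h) s' * (r h s a * dstar P H (tL L h) s' h s))"
    by (simp add: sum_distrib_left mult.assoc mult.left_commute)
  also have "\<dots> = (\<Sum>s'\<in>UNIV. \<Sum>s\<in>UNIV. \<Sum>a\<in>UNIV. occ P mu \<pi> (tL L h) s' * (r h s a * dstar P H (tL L h) s' h s))"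
    by (rule sum3_swap[symmetric])
  also have "\<dots> = (\<Sum>x\<in>UNIV. occ P mu \<pi> (tL L h) x * cfun P H L r h x)"
    by (simp add: cfun_def sum_distrib_left)
  finally show "(\<Sum>s\<in>UNIV. \<Sum>a\<in>UNIV. r h s a * (\<Sum>s'\<in>UNIV. occ P mu \<pi> (tL L h) s' * dstar P H (tL L h) s' h s))
      = (\<Sum>x\<in>UNIV. occ P mu \<pi> (tL L h) x * cfun P H L r h x)" .
qed

lemma Jv_eq:
  assumes "1 \<le> L"
  shows "Jv P mu H L r \<pi> = (\<Sum>t\<in>{1..H}. \<Sum>x\<in>UNIV. flow P \<pi> 1 mu (t - 1) x * gfun P H L r t x)"
proof -
  let ?F = "\<lambda>h. \<Sum>x\<in>UNIV. occ P mu \<pi> (tL L h) x * cfun P H L r h x"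
  have "Jv P mu H L r \<pi> = (\<Sum>h\<in>{1..H}. ?F h)" by (rule Jv_eq1)
  also have "\<dots> = (\<Sum>t\<in>{1..H}. \<Sum>h\<in>{h\<in>{1..H}. tL L h = t}. ?F h)"
    by (rule sum.group[symmetric]) (use tL_range(1)[OF assms] in auto)
  also have "\<dots> = (\<Sum>t\<in>{1..H}. \<Sum>h\<in>{h\<in>{1..H}. tL L h = t}. \<Sum>x\<in>UNIV. flow P \<pi> 1 mu (t - 1) x * cfun P H L r h x)"
    by (intro sum.cong refl) (auto simp: occ_def)
  also have "\<dots> = (\<Sum>t\<in>{1..H}. \<Sum>x\<in>UNIV. flow P \<pi> 1 mu (t - 1) x * gfun P H L r t x)"
    unfolding gfun_def sum_distrib_left by (intro sum.cong refl sum.swap)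
  finally show ?thesis .
qed

definition pi0 where "pi0 P H L r = pistar P H (gfun P H L r)"

lemma Jv_opt:
  assumes "1 \<le> L" "markov_policy H \<pi>" "\<And>x. 0 \<le> mu x"
    and P_nonneg: "\<forall>h\<in>{1..H}. \<forall>s a s'. 0 \<le> P h s a s'"
  shows "Jv P mu H L r \<pi> \<le> Jv P mu H L r (pi0 P H L r)"
proof -
  have "Jv P mu H L r \<pi> + 0 \<le> (\<Sum>x\<in>UNIV. mu x * Vd P H (gfun P H L r) H x)"
    using obj_le[where g="gfun P H L r", OF order_refl assms(2,3) P_nonneg] by (simp add: Jv_eq[OF assms(1)])
  moreover have "Jv P mu H L r (pi0 P H L r) + 0 = (\<Sum>x\<in>UNIV. mu x * Vd P H (gfun P H L r) H x)"
    using obj_eq[where g="gfun P H L r" and P=P and mu=mu, OF order_refl] by (simp add: Jv_eq[OF assms(1)] pi0_def)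
  ultimately show ?thesis by simp
qed



lemma indep_int:
  fixes D :: "nat \<Rightarrow> 'c measure" and \<psi> :: "'c \<Rightarrow> real" and \<Phi> :: "(nat \<Rightarrow> 'c) \<Rightarrow> real"
  assumes pD: "\<And>i. prob_space (D i)" and fin: "finite I" and hI: "h \<in> I"
    and psi: "integrable (D h) \<psi>"
    and Phi: "\<Phi> \<in> borel_measurable (PiM I D)" and bnd: "\<And>R. R \<in> space (PiM I D) \<Longrightarrow> \<bar>\<Phi> R\<bar> \<le> B"
    and dep: "\<And>R R'. (\<forall>j\<in>I - {h}. R j = R' j) \<Longrightarrow> \<Phi> R = \<Phi> R'"
  shows "(\<integral>R. \<psi> (R h) * \<Phi> R \<partial>PiM I D) = (\<integral>w. \<psi> w \<partial>D h) * (\<integral>R. \<Phi> R \<partial>PiM I D)"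
proof -
  interpret product_prob_space D by (simp add: product_prob_space_def product_prob_space_axioms_def product_sigma_finite_def pD prob_space_imp_sigma_finite)
  let ?I' = "I - {h}"
  have IJ: "I = ?I' \<union> {h}" "?I' \<inter> {h} = {}" using hI by auto
  have psim: "\<psi> \<in> borel_measurable (D h)" using psi by auto
  have pPI: "prob_space (PiM I D)" by (rule prob_space_PiM) (simp add: pD)
  have B0: "0 \<le> B"
  proof -
    obtain R where "R \<in> space (PiM I D)" using prob_space.not_empty[OF pPI] by blast
    then show ?thesis using bnd[of R] by linarith
  qed
  have ipsi: "integrable (PiM I D) (\<lambda>R. \<psi> (R h))"
  proof -
    have "integrable (distr (PiM I D) (D h) (\<lambda>R. R h)) \<psi>" using PiM_component[OF hI] psi by simp
    then show ?thesis
      by (subst (asm) integrable_distr_eq) (auto intro: measurable_component_singleton hI psim)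
  qed
  have iPhi: "integrable (PiM I D) \<Phi>"
    by (rule finite_measure.integrable_const_bound[OF prob_space.finite_measure[OF pPI], where B=B]) (use bnd Phi in auto)
  have iB: "integrable (PiM I D) (\<lambda>R. B * \<psi> (R h))" using ipsi by simp
  have mprod: "(\<lambda>R. \<psi> (R h) * \<Phi> R) \<in> borel_measurable (PiM I D)"
    using ipsi Phi by auto
  have bprod: "AE R in PiM I D. norm (\<psi> (R h) * \<Phi> R) \<le> norm (B * \<psi> (R h))"
  proof (rule AE_I2)
    fix R assume "R \<in> space (PiM I D)"
    then have "\<bar>\<psi> (R h)\<bar> * \<bar>\<Phi> R\<bar> \<le> \<bar>\<psi> (R h)\<bar> * B" using bnd by (intro mult_left_mono) auto
    then show "norm (\<psi> (R h) * \<Phi> R) \<le> norm (B * \<psi> (R h))" using B0 by (simp add: abs_mult mult.commute)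
  qed
  have iprod: "integrable (PiM I D) (\<lambda>R. \<psi> (R h) * \<Phi> R)"
    using Bochner_Integration.integrable_bound[OF iB mprod bprod] .
  define \<Psi> where "\<Psi> x = \<Phi> (merge ?I' {h} (x, \<lambda>_. undefined))" for x
  have Pm: "\<Phi> (merge ?I' {h} (x, y)) = \<Psi> x" for x y
    unfolding \<Psi>_def by (rule dep) (auto simp: merge_def)
  have "(\<integral>R. \<psi> (R h) * \<Phi> R \<partial>PiM I D) = (\<integral>R. \<psi> (R h) * \<Phi> R \<partial>PiM (?I' \<union> {h}) D)"
    using IJ by simp
  also have "\<dots> = (\<integral>x. (\<integral>y. \<psi> (merge ?I' {h} (x, y) h) * \<Phi> (merge ?I' {h} (x, y)) \<partial>PiM {h} D) \<partial>PiM ?I' D)"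
    by (rule product_integral_fold) (use IJ fin iprod in auto)
  also have "\<dots> = (\<integral>x. (\<integral>y. \<psi> (y h) \<partial>PiM {h} D) * \<Psi> x \<partial>PiM ?I' D)"
  proof (rule Bochner_Integration.integral_cong[OF refl])
    fix x
    have "\<And>y. \<psi> (merge ?I' {h} (x, y) h) * \<Phi> (merge ?I' {h} (x, y)) = \<psi> (y h) * \<Psi> x"
      by (subst Pm) (simp add: merge_def)
    then show "(\<integral>y. \<psi> (merge ?I' {h} (x, y) h) * \<Phi> (merge ?I' {h} (x, y)) \<partial>PiM {h} D) = (\<integral>y. \<psi> (y h) \<partial>PiM {h} D) * \<Psi> x"
      by (simp only: integral_mult_left_zero)
  qed
  also have "\<dots> = (\<integral>x. (\<integral>w. \<psi> w \<partial>D h) * \<Psi> x \<partial>PiM ?I' D)"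
    by (simp add: product_integral_singleton psim)
  also have "\<dots> = (\<integral>w. \<psi> w \<partial>D h) * (\<integral>x. \<Psi> x \<partial>PiM ?I' D)"
    by simp
  also have "(\<integral>x. \<Psi> x \<partial>PiM ?I' D) = (\<integral>x. (\<integral>y. \<Phi> (merge ?I' {h} (x, y)) \<partial>PiM {h} D) \<partial>PiM ?I' D)"
  proof -
    have pPH: "prob_space (PiM {h} D)" by (rule prob_space_PiM) (simp add: pD)
    have c: "(\<integral>y. c \<partial>PiM {h} D) = c" for c :: real
      using prob_space.prob_space[OF pPH] by simp
    show ?thesis by (simp only: Pm c)
  qed
  also have "\<dots> = (\<integral>R. \<Phi> R \<partial>PiM (?I' \<union> {h}) D)"
    by (rule product_integral_fold[symmetric]) (use IJ fin iPhi in auto)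
  also have "\<dots> = (\<integral>R. \<Phi> R \<partial>PiM I D)" using IJ by simp
  finally show ?thesis .
qed

lemma indep_integrable:
  fixes D :: "nat \<Rightarrow> 'c measure" and \<psi> :: "'c \<Rightarrow> real" and \<Phi> :: "(nat \<Rightarrow> 'c) \<Rightarrow> real"
  assumes pD: "\<And>i. prob_space (D i)" and fin: "finite I" and hI: "h \<in> I"
    and psi: "integrable (D h) \<psi>"
    and Phi: "\<Phi> \<in> borel_measurable (PiM I D)" and bnd: "\<And>R. R \<in> space (PiM I D) \<Longrightarrow> \<bar>\<Phi> R\<bar> \<le> B"
  shows "integrable (PiM I D) (\<lambda>R. \<psi> (R h) * \<Phi> R)"
proof -
  interpret product_prob_space D by (simp add: product_prob_space_def product_prob_space_axioms_def product_sigma_finite_def pD prob_space_imp_sigma_finite)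
  have psim: "\<psi> \<in> borel_measurable (D h)" using psi by auto
  have pPI: "prob_space (PiM I D)" by (rule prob_space_PiM) (simp add: pD)
  have B0: "0 \<le> B"
  proof -
    obtain R where "R \<in> space (PiM I D)" using prob_space.not_empty[OF pPI] by blast
    then show ?thesis using bnd[of R] by linarith
  qed
  have ipsi: "integrable (PiM I D) (\<lambda>R. \<psi> (R h))"
  proof -
    have "integrable (distr (PiM I D) (D h) (\<lambda>R. R h)) \<psi>" using PiM_component[OF hI] psi by simp
    then show ?thesis
      by (subst (asm) integrable_distr_eq) (auto intro: measurable_component_singleton hI psim)
  qed
  have iB: "integrable (PiM I D) (\<lambda>R. B * \<psi> (R h))" using ipsi by simp
  have mprod: "(\<lambda>R. \<psi> (R h) * \<Phi> R) \<in> borel_measurable (PiM I D)"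
    using ipsi Phi by auto
  have bprod: "AE R in PiM I D. norm (\<psi> (R h) * \<Phi> R) \<le> norm (B * \<psi> (R h))"
  proof (rule AE_I2)
    fix R assume "R \<in> space (PiM I D)"
    then have "\<bar>\<psi> (R h)\<bar> * \<bar>\<Phi> R\<bar> \<le> \<bar>\<psi> (R h)\<bar> * B" using bnd by (intro mult_left_mono) auto
    then show "norm (\<psi> (R h) * \<Phi> R) \<le> norm (B * \<psi> (R h))" using B0 by (simp add: abs_mult mult.commute)
  qed
  show ?thesis using Bochner_Integration.integrable_bound[OF iB mprod bprod] .
qed



lemma ev_meas: "(\<lambda>f::'s::finite\<Rightarrow>'a::finite\<Rightarrow>real. f s a) \<in> borel_measurable borel"
proof -
  have "continuous_on UNIV (\<lambda>f::'s\<Rightarrow>'a\<Rightarrow>real. f s)" by simp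
  then have "continuous_on UNIV (\<lambda>f::'s\<Rightarrow>'a\<Rightarrow>real. f s a)"
    by (rule continuous_on_compose2[OF continuous_on_product_coordinates]) auto
  then show ?thesis by (rule borel_measurable_continuous_onI)
qed

lemma comp_meas:
  fixes D :: "nat \<Rightarrow> ('s::finite \<Rightarrow> 'a::finite \<Rightarrow> real) measure"
  assumes "j \<in> {1..H}" "sets (D j) = sets borel"
  shows "(\<lambda>R. R j s a) \<in> borel_measurable (PiM {1..H} D)"
proof -
  have "(\<lambda>R. R j) \<in> measurable (PiM {1..H} D) (D j)" by (rule measurable_component_singleton) (use assms in auto)
  then have "(\<lambda>R. R j) \<in> measurable (PiM {1..H} D) borel" by (simp add: measurable_cong_sets[OF refl assms(2)])
  then show ?thesis using ev_meas by (rule measurable_compose)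
qed

lemma flow_meas:
  assumes "\<forall>k\<in>{1..H}. \<forall>x a. (\<lambda>R. dd R k x a) \<in> borel_measurable M" "n \<le> H"
  shows "(\<lambda>R. flow P (dd R) 1 mu n s) \<in> borel_measurable M"
  using assms(2)
proof (induction n arbitrary: s)
  case 0 then show ?case by simp
next
  case (Suc n)
  have m: "(\<lambda>R. dd R (1 + n) x a) \<in> borel_measurable M" for x a using assms(1) Suc.prems by auto
  have "(\<lambda>R. \<Sum>s0\<in>UNIV. \<Sum>a\<in>UNIV. flow P (dd R) 1 mu n s0 * dd R (1 + n) s0 a * P (1 + n) s0 a s) \<in> borel_measurable M"
    using Suc.IH Suc.prems m by (intro borel_measurable_sum borel_measurable_times) auto
  then show ?case by simp
qed

lemma flow_split:
  assumes "1 \<le> t" "t \<le> h"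
  shows "flow P \<pi> 1 mu (h - 1) s = (\<Sum>x\<in>UNIV. flow P \<pi> 1 mu (t - 1) x * cocc P \<pi> t x h s)"
proof -
  have "flow P \<pi> 1 mu (h - 1) s = flow P \<pi> 1 mu ((t - 1) + (h - t)) s" using assms by simp
  also have "\<dots> = flow P \<pi> t (flow P \<pi> 1 mu (t - 1)) (h - t) s"
  proof -
    have e: "1 + (t - 1) = t" using assms by simp
    show ?thesis by (simp only: flow_add e)
  qed
  also have "\<dots> = (\<Sum>x\<in>UNIV. flow P \<pi> 1 mu (t - 1) x * cocc P \<pi> t x h s)"
    by (subst flow_linear) (simp add: cocc_def)
  finally show ?thesis .
qed

lemma flow_bounds:
  assumes "markov_policy H \<pi>" "n \<le> H" "\<forall>s. 0 \<le> mu s" "(\<Sum>s\<in>UNIV. mu s) = 1"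
    and P_nonneg: "\<forall>h\<in>{1..H}. \<forall>s a s'. 0 \<le> P h s a s'"
    and P_sum: "\<forall>h\<in>{1..H}. \<forall>s a. (\<Sum>s'\<in>UNIV. P h s a s') = 1"
  shows "0 \<le> flow P \<pi> 1 mu n s" "flow P \<pi> 1 mu n s \<le> 1"
proof -
  have kr: "1 + k \<in> {1..H}" if "k < n" for k using that assms(2) by auto
  show nn: "0 \<le> flow P \<pi> 1 mu n s" for s
    by (rule flow_nonneg) (use assms(3) markov_nn[OF assms(1) kr] P_nonneg kr in auto)
  have "(\<Sum>s\<in>UNIV. flow P \<pi> 1 mu n s) = 1"
    using flow_sum[of n \<pi> 1 P mu] markov_sum[OF assms(1) kr] P_sum kr assms(4) by auto
  then show "flow P \<pi> 1 mu n s \<le> 1"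
    using member_le_sum[of s UNIV "flow P \<pi> 1 mu n"] nn by auto
qed



lemma int_sum4:
  fixes A :: "nat \<Rightarrow> 's::finite \<Rightarrow> 'a::finite \<Rightarrow> 's \<Rightarrow> 'm \<Rightarrow> real"
  assumes "\<And>h s a s'. h \<in> I \<Longrightarrow> integrable M (A h s a s')"
  shows "integrable M (\<lambda>R. \<Sum>h\<in>I. \<Sum>s\<in>UNIV. \<Sum>a\<in>UNIV. \<Sum>s'\<in>UNIV. A h s a s' R)"
    "(\<integral>R. (\<Sum>h\<in>I. \<Sum>s\<in>UNIV. \<Sum>a\<in>UNIV. \<Sum>s'\<in>UNIV. A h s a s' R) \<partial>M) = (\<Sum>h\<in>I. \<Sum>s\<in>UNIV. \<Sum>a\<in>UNIV. \<Sum>s'\<in>UNIV. \<integral>R. A h s a s' R \<partial>M)"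
  using assms by (auto simp: integral_sum intro!: integrable_sum)

lemma markov_le1: "markov_policy H \<pi> \<Longrightarrow> k \<in> {1..H} \<Longrightarrow> \<pi> k x a \<le> 1"
  using member_le_sum[of a UNIV "\<pi> k x"] markov_nn[of H \<pi> k x] markov_sum[of H \<pi> k x] by auto

lemma Jv_nonneg:
  assumes "markov_policy H \<pi>" "1 \<le> L" "\<forall>s. 0 \<le> mu s" "(\<Sum>s\<in>UNIV. mu s) = 1"
    and P_nonneg: "\<forall>h\<in>{1..H}. \<forall>s a s'. 0 \<le> P h s a s'"
    and P_sum: "\<forall>h\<in>{1..H}. \<forall>s a. (\<Sum>s'\<in>UNIV. P h s a s') = 1"
    and r_nonneg: "\<forall>h\<in>{1..H}. \<forall>s a. 0 \<le> r h s a"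
  shows "0 \<le> Jv P mu H L r \<pi>"
  unfolding Jv_def
proof (intro sum_nonneg mult_nonneg_nonneg)
  fix h s a s' assume h: "h \<in> {1..H}"
  show "0 \<le> r h s a" using r_nonneg h by auto
  have t: "tL L h \<in> {1..H}" "tL L h \<le> h" using tL_range(1)[OF assms(2) h] tL_range(2)[OF assms(2)] h by auto
  show "0 \<le> occ P mu \<pi> (tL L h) s'" unfolding occ_def
    by (rule flow_bounds(1)[OF assms(1) _ assms(3,4) P_nonneg P_sum]) (use t in auto)
  show "0 \<le> dstar P H (tL L h) s' h s"
    by (rule dstar_nonneg[OF _ _ _ P_nonneg]) (use t h in auto)
qed

lemma UB:
  fixes P :: "nat \<Rightarrow> 's::finite \<Rightarrow> 'a::finite \<Rightarrow> 's \<Rightarrow> real"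
    and mu :: "'s \<Rightarrow> real" and r :: "nat \<Rightarrow> 's \<Rightarrow> 'a \<Rightarrow> real"
    and D :: "nat \<Rightarrow> ('s \<Rightarrow> 'a \<Rightarrow> real) measure"
  assumes P_nonneg: "\<forall>h\<in>{1..H}. \<forall>s a s'. 0 \<le> P h s a s'"
    and P_sum: "\<forall>h\<in>{1..H}. \<forall>s a. (\<Sum>s'\<in>UNIV. P h s a s') = 1"
    and mu_nonneg: "\<forall>s. 0 \<le> mu s"
    and mu_sum: "(\<Sum>s\<in>UNIV. mu s) = 1"
    and r_nonneg: "\<forall>h\<in>{1..H}. \<forall>s a. 0 \<le> r h s a"
    and L1: "1 \<le> L" and LH: "L \<le> H"
    and Dr: "D \<in> reward_dists H r" and pol: "pol \<in> lookahead_policies H L D"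
  shows "lookahead_value P mu H L D pol \<le> Jv P mu H L r (pi0 P H L r)"
proof -
  define I where "I = {1..H}"
  have H1: "1 \<in> I" using L1 LH by (auto simp: I_def)
  have finI: "finite I" by (simp add: I_def)
  have Dp: "prob_space (D i)" "sets (D i) = sets borel" "AE w in D i. \<forall>s a. 0 \<le> w s a"
    "integrable (D i) (\<lambda>w. w s a)" "(\<integral>w. w s a \<partial>D i) = r i s a" if "i \<in> I" for i s a
    using Dr that by (auto simp: reward_dists_def I_def)
  define Dx where "Dx i = (if i \<in> I then D i else D 1)" for i
  have pDx: "prob_space (Dx i)" for i using Dp(1) H1 by (auto simp: Dx_def)
  define M where "M = reward_law H D"
  have MM: "M = PiM I Dx" unfolding M_def reward_law_def I_def[symmetric]
    by (rule PiM_cong) (auto simp: Dx_def)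
  have pM: "prob_space M" unfolding MM by (rule prob_space_PiM) (simp add: pDx)
  define dd where "dd R = (\<lambda>h s. pol h s (window L H h R))" for R
  have mk: "markov_policy H (dd R)" for R
    using pol unfolding lookahead_policies_def markov_policy_def dd_def by auto
  have dmeas: "\<forall>k\<in>{1..H}. \<forall>x a. (\<lambda>R. dd R k x a) \<in> borel_measurable M"
    using pol unfolding lookahead_policies_def dd_def M_def by auto
  have cm: "(\<lambda>R. R j s a) \<in> borel_measurable M" if "j \<in> I" for j s a
    unfolding M_def reward_law_def by (rule comp_meas) (use that Dp(2) in \<open>auto simp: I_def\<close>)
  define f where "f R = (\<Sum>h\<in>I. \<Sum>s\<in>UNIV. \<Sum>a\<in>UNIV. flow P (dd R) 1 mu (h - 1) s * dd R h s a * R h s a)" for R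
  have val: "lookahead_value P mu H L D pol = (\<integral>R. f R \<partial>M)"
    unfolding lookahead_value_def Let_def f_def dd_def M_def I_def ..
  define \<Phi> where "\<Phi> h s' R = flow P (dd R) 1 mu (tL L h - 1) s'" for h s' R
  define ds where "ds h s' s = dstar P H (tL L h) s' h s" for h s' s
  have tr: "tL L h \<in> {1..H}" "tL L h \<le> h" if "h \<in> I" for h
    using tL_range(1)[OF L1, of h H] tL_range(2)[OF L1, of h] that by (auto simp: I_def)
  have ds_nn: "0 \<le> ds h s' s" if "h \<in> I" for h s' s
    unfolding ds_def by (rule dstar_nonneg[OF _ _ _ P_nonneg]) (use tr[OF that] that in \<open>auto simp: I_def\<close>)
  have Phi_b: "0 \<le> \<Phi> h s' R" "\<Phi> h s' R \<le> 1" if "h \<in> I" for h s' R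
    unfolding \<Phi>_def using flow_bounds[OF mk _ mu_nonneg mu_sum P_nonneg P_sum, of "tL L h - 1" R s'] tr[OF that] by auto
  have Phi_m: "(\<lambda>R. \<Phi> h s' R) \<in> borel_measurable M" if "h \<in> I" for h s'
    unfolding \<Phi>_def by (rule flow_meas[OF dmeas]) (use tr[OF that] in auto)
  have Phi_dep: "\<Phi> h s' R = \<Phi> h s' R'" if "h \<in> I" "\<forall>j\<in>I - {h}. R j = R' j" for h s' R R'
    unfolding \<Phi>_def
  proof (rule fun_cong[OF flow_cong])
    fix k assume k: "k < tL L h - 1"
    have "window L H (1 + k) R = window L H (1 + k) R'"
    proof
      fix j
      show "window L H (1 + k) R j = window L H (1 + k) R' j"
      proof (cases "1 + k \<le> j \<and> j \<le> min (1 + k + L - 1) H")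
        case True
        then have "j \<in> I - {h}" using k L1 by (auto simp: I_def tL_def)
        then show ?thesis using True that(2) by (simp add: window_def)
      next
        case False
        then show ?thesis by (simp only: window_def if_False)
      qed
    qed
    then show "dd R (1 + k) = dd R' (1 + k)" by (simp add: dd_def)
  qed
  define F where "F R = (\<Sum>h\<in>I. \<Sum>s\<in>UNIV. \<Sum>a\<in>UNIV. \<Sum>s'\<in>UNIV. R h s a * (\<Phi> h s' R * ds h s' s))" for R
  define G where "G R = (\<Sum>h\<in>I. \<Sum>s\<in>UNIV. \<Sum>a\<in>UNIV. \<Sum>s'\<in>UNIV. r h s a * (\<Phi> h s' R * ds h s' s))" for R
  have G_eq: "G R = Jv P mu H L r (dd R)" for R
    unfolding G_def Jv_def I_def occ_def \<Phi>_def ds_def by (simp add: sum_distrib_left)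
  have G_le: "G R \<le> Jv P mu H L r (pi0 P H L r)" for R
    unfolding G_eq by (rule Jv_opt[OF L1 mk _ P_nonneg]) (use mu_nonneg in auto)
  have iPd: "integrable M (\<lambda>R. \<Phi> h s' R * ds h s' s)" if "h \<in> I" for h s' s
  proof (rule finite_measure.integrable_const_bound[OF prob_space.finite_measure[OF pM], where B="ds h s' s"])
    show "AE R in M. norm (\<Phi> h s' R * ds h s' s) \<le> ds h s' s"
      using Phi_b[OF that] ds_nn[OF that] by (intro AE_I2) (auto simp: abs_mult intro!: mult_left_le_one_le)
    show "(\<lambda>R. \<Phi> h s' R * ds h s' s) \<in> borel_measurable M" using Phi_m[OF that] by simp
  qed
  have iF: "integrable M (\<lambda>R. R h s a * (\<Phi> h s' R * ds h s' s))" if "h \<in> I" for h s a s'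
    unfolding MM
  proof (rule indep_integrable[OF pDx finI that, where B="ds h s' s"])
    show "integrable (Dx h) (\<lambda>w. w s a)" using Dp(4)[OF that] that by (simp add: Dx_def)
    show "(\<lambda>R. \<Phi> h s' R * ds h s' s) \<in> borel_measurable (PiM I Dx)" using Phi_m[OF that, of s'] by (simp add: MM[symmetric])
    show "\<bar>\<Phi> h s' R * ds h s' s\<bar> \<le> ds h s' s" for R
      using Phi_b[OF that] ds_nn[OF that] by (auto simp: abs_mult intro!: mult_left_le_one_le)
  qed
  have eF: "(\<integral>R. R h s a * (\<Phi> h s' R * ds h s' s) \<partial>M) = (\<integral>R. r h s a * (\<Phi> h s' R * ds h s' s) \<partial>M)" if "h \<in> I" for h s a s'
  proof -
    have "(\<integral>R. R h s a * (\<Phi> h s' R * ds h s' s) \<partial>M) = (\<integral>w. w s a \<partial>Dx h) * (\<integral>R. \<Phi> h s' R * ds h s' s \<partial>PiM I Dx)"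
      unfolding MM
    proof (rule indep_int[OF pDx finI that, where B="ds h s' s"])
      show "integrable (Dx h) (\<lambda>w. w s a)" using Dp(4)[OF that] that by (simp add: Dx_def)
      show "(\<lambda>R. \<Phi> h s' R * ds h s' s) \<in> borel_measurable (PiM I Dx)" using Phi_m[OF that, of s'] by (simp add: MM[symmetric])
      show "\<bar>\<Phi> h s' R * ds h s' s\<bar> \<le> ds h s' s" for R
        using Phi_b[OF that] ds_nn[OF that] by (auto simp: abs_mult intro!: mult_left_le_one_le)
      show "\<Phi> h s' R * ds h s' s = \<Phi> h s' R' * ds h s' s" if "\<forall>j\<in>I - {h}. R j = R' j" for R R'
        using Phi_dep[OF \<open>h \<in> I\<close> that] by simp
    qed
    also have "\<dots> = (\<integral>R. r h s a * (\<Phi> h s' R * ds h s' s) \<partial>M)"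
      using Dp(5)[OF that] that by (simp add: Dx_def MM)
    finally show ?thesis .
  qed
  have iG: "integrable M (\<lambda>R. r h s a * (\<Phi> h s' R * ds h s' s))" if "h \<in> I" for h s a s'
    using iPd[OF that] by simp
  have intF: "integrable M F" unfolding F_def by (rule int_sum4(1)[where A="\<lambda>h s a s' R. R h s a * (\<Phi> h s' R * ds h s' s)"]) (rule iF)
  have FG: "(\<integral>R. F R \<partial>M) = (\<integral>R. G R \<partial>M)"
  proof -
    have 1: "(\<integral>R. F R \<partial>M) = (\<Sum>h\<in>I. \<Sum>s\<in>UNIV. \<Sum>a\<in>UNIV. \<Sum>s'\<in>UNIV. \<integral>R. R h s a * (\<Phi> h s' R * ds h s' s) \<partial>M)"
      unfolding F_def by (rule int_sum4(2)[where A="\<lambda>h s a s' R. R h s a * (\<Phi> h s' R * ds h s' s)"]) (rule iF)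
    have 2: "(\<integral>R. G R \<partial>M) = (\<Sum>h\<in>I. \<Sum>s\<in>UNIV. \<Sum>a\<in>UNIV. \<Sum>s'\<in>UNIV. \<integral>R. r h s a * (\<Phi> h s' R * ds h s' s) \<partial>M)"
      unfolding G_def by (rule int_sum4(2)[where A="\<lambda>h s a s' R. r h s a * (\<Phi> h s' R * ds h s' s)"]) (rule iG)
    show ?thesis unfolding 1 2 by (intro sum.cong refl) (rule eF)
  qed
  have intG: "integrable M G" unfolding G_def by (rule int_sum4(1)[where A="\<lambda>h s a s' R. r h s a * (\<Phi> h s' R * ds h s' s)"]) (rule iG)
  have GJ: "(\<integral>R. G R \<partial>M) \<le> Jv P mu H L r (pi0 P H L r)"
  proof -
    have "(\<integral>R. G R \<partial>M) \<le> (\<integral>R. Jv P mu H L r (pi0 P H L r) \<partial>M)"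
      by (rule integral_mono[OF intG]) (use G_le finite_measure.integrable_const[OF prob_space.finite_measure[OF pM]] in auto)
    also have "\<dots> = Jv P mu H L r (pi0 P H L r)" using prob_space.prob_space[OF pM] by simp
    finally show ?thesis .
  qed
  have AEnn: "AE R in M. \<forall>h\<in>I. \<forall>s a. 0 \<le> R h s a"
  proof (rule AE_finite_allI[OF finI])
    fix h assume h: "h \<in> I"
    have e: "D h = Dx h" using h by (simp add: Dx_def)
    note aeh = Dp(3)[OF h, unfolded e]
    have pp: "\<And>i. i \<in> I \<Longrightarrow> prob_space (Dx i)" by (rule pDx)
    show "AE R in M. \<forall>s a. 0 \<le> R h s a"
      unfolding MM using AE_PiM_component[where M=Dx and I=I and i=h, OF pp h aeh] by simp
  qed
  have fF: "f R \<le> F R" if nn: "\<forall>h\<in>I. \<forall>s a. 0 \<le> R h s a" for R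
    unfolding f_def F_def
  proof (rule sum_mono, rule sum_mono)
    fix h and s :: 's assume h: "h \<in> I" and "s \<in> UNIV"
    define K where "K = (\<Sum>s'\<in>UNIV. \<Phi> h s' R * ds h s' s)"
    have fl: "flow P (dd R) 1 mu (h - 1) s \<le> K"
    proof -
      have "flow P (dd R) 1 mu (h - 1) s = (\<Sum>x\<in>UNIV. \<Phi> h x R * cocc P (dd R) (tL L h) x h s)"
        unfolding \<Phi>_def by (rule flow_split) (use tr[OF h] in auto)
      also have "\<dots> \<le> K" unfolding K_def ds_def
        by (intro sum_mono mult_left_mono dstar_cocc[OF _ _ _ mk P_nonneg] Phi_b(1)[OF h]) (use tr[OF h] h in \<open>auto simp: I_def\<close>)
      finally show ?thesis .
    qed
    have fl0: "0 \<le> flow P (dd R) 1 mu (h - 1) s"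
      by (rule flow_bounds(1)[OF mk _ mu_nonneg mu_sum P_nonneg P_sum]) (use h in \<open>auto simp: I_def\<close>)
    show "(\<Sum>a\<in>UNIV. flow P (dd R) 1 mu (h - 1) s * dd R h s a * R h s a) \<le> (\<Sum>a\<in>UNIV. \<Sum>s'\<in>UNIV. R h s a * (\<Phi> h s' R * ds h s' s))"
    proof (rule sum_mono)
      fix a
      have d1: "dd R h s a \<le> 1" "0 \<le> dd R h s a" using markov_le1[OF mk, of h R s a] markov_nn[OF mk, of h R s a] h by (auto simp: I_def)
      have "flow P (dd R) 1 mu (h - 1) s * dd R h s a \<le> K"
        using fl fl0 d1 by (meson mult_left_le order_trans)
      then have "flow P (dd R) 1 mu (h - 1) s * dd R h s a * R h s a \<le> K * R h s a"
        using nn h by (intro mult_right_mono) auto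
      also have "\<dots> = (\<Sum>s'\<in>UNIV. R h s a * (\<Phi> h s' R * ds h s' s))"
        unfolding K_def by (simp add: sum_distrib_left sum_distrib_right mult.commute)
      finally show "flow P (dd R) 1 mu (h - 1) s * dd R h s a * R h s a \<le> (\<Sum>s'\<in>UNIV. R h s a * (\<Phi> h s' R * ds h s' s))" .
    qed
  qed
  show ?thesis
  proof (cases "integrable M f")
    case True
    have "(\<integral>R. f R \<partial>M) \<le> (\<integral>R. F R \<partial>M)"
      by (rule integral_mono_AE[OF True intF]) (use AEnn fF in auto)
    then show ?thesis using val FG GJ by simp
  next
    case False
    then have "(\<integral>R. f R \<partial>M) = 0" by (rule not_integrable_integral_eq)
    moreover have "0 \<le> Jv P mu H L r (pi0 P H L r)"
      by (rule Jv_nonneg[OF markov_pistar[of H P "gfun P H L r", folded pi0_def] L1 mu_nonneg mu_sum P_nonneg P_sum r_nonneg])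
    ultimately show ?thesis using val by simp
  qed
qed



lemma sum_option: "(\<Sum>z\<in>UNIV. f z) = f None + (\<Sum>x\<in>UNIV. f (Some (x::'b::finite)))"
proof -
  have "(\<Sum>z\<in>UNIV. f z) = (\<Sum>z\<in>insert None (range Some). f z)" by (simp add: UNIV_option_conv[symmetric])
  also have "\<dots> = f None + (\<Sum>z\<in>range Some. f z)" by (subst sum.insert) auto
  also have "(\<Sum>z\<in>range Some. f z) = (\<Sum>x\<in>UNIV. f (Some x))" by (subst sum.reindex) auto
  finally show ?thesis .
qed

definition NN :: "('s::finite \<times> 'a::finite) itself \<Rightarrow> real" where
  "NN _ = real (card (UNIV :: ('s \<times> 'a) set))"

lemma NN_pos: "0 < NN (TYPE('s::finite \<times> 'a::finite))"
  unfolding NN_def by simp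

definition qf :: "real \<Rightarrow> ('s::finite \<times> 'a::finite) option \<Rightarrow> real" where
  "qf e z = (case z of None \<Rightarrow> 1 - e | Some _ \<Rightarrow> e / NN (TYPE('s \<times> 'a)))"

definition qp :: "real \<Rightarrow> ('s::finite \<times> 'a::finite) option pmf" where
  "qp e = embed_pmf (qf e)"

lemma qf_sum: "(\<Sum>z\<in>UNIV. qf e (z :: ('s::finite \<times> 'a::finite) option)) = 1"
proof -
  have "(\<Sum>x\<in>(UNIV::('s \<times> 'a) set). e / NN (TYPE('s \<times> 'a))) = e"
    using NN_pos[where 's='s and 'a='a] by (simp add: NN_def)
  then show ?thesis by (simp add: sum_option qf_def)
qed

lemma pmf_qp:
  assumes "0 \<le> e" "e \<le> 1"
  shows "pmf (qp e) z = qf e (z :: ('s::finite \<times> 'a::finite) option)"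
  unfolding qp_def
proof (rule pmf_embed_pmf)
  show "0 \<le> qf e x" for x :: "('s \<times> 'a) option"
    using assms NN_pos[where 's='s and 'a='a] by (auto simp: qf_def split: option.split)
  then show "(\<integral>\<^sup>+x. ennreal (qf e (x :: ('s \<times> 'a) option)) \<partial>count_space UNIV) = 1"
  proof -
    assume nn: "\<And>x. 0 \<le> qf e (x :: ('s \<times> 'a) option)"
    have "(\<integral>\<^sup>+x. ennreal (qf e (x :: ('s \<times> 'a) option)) \<partial>count_space UNIV) = (\<Sum>x\<in>UNIV. ennreal (qf e (x :: ('s \<times> 'a) option)))"
      by (rule nn_integral_count_space_finite) simp
    also have "\<dots> = ennreal (\<Sum>x\<in>UNIV. qf e (x :: ('s \<times> 'a) option))"
      by (rule sum_ennreal) (rule nn)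
    also have "\<dots> = 1" by (simp add: qf_sum)
    finally show ?thesis .
  qed
qed

definition vt :: "(nat \<Rightarrow> 's::finite \<Rightarrow> 'a::finite \<Rightarrow> real) \<Rightarrow> real \<Rightarrow> nat \<Rightarrow> 's \<Rightarrow> 'a \<Rightarrow> 's \<Rightarrow> 'a \<Rightarrow> real" where
  "vt r e h s0 a0 = (\<lambda>s a. if s = s0 \<and> a = a0 then NN (TYPE('s \<times> 'a)) * r h s0 a0 / e else 0)"

definition val :: "(nat \<Rightarrow> 's::finite \<Rightarrow> 'a::finite \<Rightarrow> real) \<Rightarrow> real \<Rightarrow> nat \<Rightarrow> ('s \<times> 'a) option \<Rightarrow> 's \<Rightarrow> 'a \<Rightarrow> real" where
  "val r e h z = (case z of None \<Rightarrow> (\<lambda>s a. 0) | Some (s0, a0) \<Rightarrow> vt r e h s0 a0)"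

definition Dl :: "(nat \<Rightarrow> 's::finite \<Rightarrow> 'a::finite \<Rightarrow> real) \<Rightarrow> real \<Rightarrow> nat \<Rightarrow> ('s \<Rightarrow> 'a \<Rightarrow> real) measure" where
  "Dl r e h = distr (measure_pmf (qp e)) borel (val r e h)"

lemma Dl_prob: "prob_space (Dl r e h)"
  unfolding Dl_def by (rule prob_space.prob_space_distr) (auto simp: measure_pmf.prob_space_axioms)

lemma Dl_sets: "sets (Dl r e h) = sets borel"
  unfolding Dl_def by simp

lemma Dl_integral:
  fixes F :: "('s::finite \<Rightarrow> 'a::finite \<Rightarrow> real) \<Rightarrow> real"
  assumes "0 \<le> e" "e \<le> 1" "F \<in> borel_measurable borel"
  shows "(\<integral>w. F w \<partial>Dl r e h) = (\<Sum>z\<in>UNIV. F (val r e h z) * qf e z)"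
proof -
  have "(\<integral>w. F w \<partial>Dl r e h) = (\<integral>z. F (val r e h z) \<partial>measure_pmf (qp e))"
    unfolding Dl_def by (rule integral_distr) (use assms in auto)
  also have "\<dots> = (\<Sum>z\<in>UNIV. F (val r e h z) * pmf (qp e) z)"
    by (rule integral_measure_pmf_real) auto
  also have "\<dots> = (\<Sum>z\<in>UNIV. F (val r e h z) * qf e z)"
    by (intro sum.cong refl) (simp add: pmf_qp[OF assms(1,2)])
  finally show ?thesis .
qed

lemma Dl_integrable:
  fixes F :: "('s::finite \<Rightarrow> 'a::finite \<Rightarrow> real) \<Rightarrow> real"
  assumes "F \<in> borel_measurable borel"
  shows "integrable (Dl r e h) F"
proof -
  have "integrable (measure_pmf (qp e)) (\<lambda>z. F (val r e h z))" by (rule integrable_measure_pmf_finite) (rule finite)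
  then show ?thesis unfolding Dl_def by (simp add: integrable_distr_eq[OF _ assms])
qed



declare ev_meas[measurable]

definition ind :: "('s::finite \<Rightarrow> 'a::finite \<Rightarrow> real) \<Rightarrow> ('s \<Rightarrow> 'a \<Rightarrow> real) \<Rightarrow> real" where
  "ind v w = (if w = v then 1 else 0)"

lemma ind_meas[measurable]: "(\<lambda>w. ind (v::'s::finite \<Rightarrow> 'a::finite \<Rightarrow> real) w) \<in> borel_measurable borel"
proof -
  have e: "(\<lambda>w::'s::finite\<Rightarrow>'a::finite\<Rightarrow>real. w = v) = (\<lambda>w. \<forall>s a. w s a = v s a)" by (auto simp: fun_eq_iff)
  have "Measurable.pred borel (\<lambda>w::'s::finite\<Rightarrow>'a::finite\<Rightarrow>real. w = v)" unfolding e by measurable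
  then show ?thesis unfolding ind_def by measurable
qed

lemma NN_card: "NN (TYPE('s::finite \<times> 'a::finite)) = real (card (UNIV :: ('s \<times> 'a) set))"
  by (simp add: NN_def)

lemma sum_pair_delta: "(\<Sum>x\<in>(UNIV::('s::finite \<times> 'a::finite) set). (case x of (s0, a0) \<Rightarrow> if s = s0 \<and> a = a0 then c s0 a0 else 0)) = c s a"
proof -
  have "(\<Sum>x\<in>(UNIV::('s \<times> 'a) set). (case x of (s0, a0) \<Rightarrow> if s = s0 \<and> a = a0 then c s0 a0 else 0))
      = (\<Sum>x\<in>(UNIV::('s \<times> 'a) set). if x = (s, a) then c s a else 0)"
  proof (rule sum.cong[OF refl])
    fix x :: "'s \<times> 'a"
    show "(case x of (s0, a0) \<Rightarrow> if s = s0 \<and> a = a0 then c s0 a0 else 0) = (if x = (s, a) then c s a else 0)"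
      by (cases x) auto
  qed
  then show ?thesis by simp
qed

lemma Dl_mean:
  fixes r :: "nat \<Rightarrow> 's::finite \<Rightarrow> 'a::finite \<Rightarrow> real"
  assumes "0 < e" "e \<le> 1"
  shows "(\<integral>w. w s a \<partial>Dl r e h) = r h s a"
proof -
  have "(\<integral>w. w s a \<partial>Dl r e h) = (\<Sum>z\<in>UNIV. val r e h z s a * qf e z)"
    by (rule Dl_integral) (use assms in auto)
  also have "\<dots> = (\<Sum>x\<in>UNIV. val r e h (Some x) s a * qf e (Some x))"
    by (simp add: sum_option val_def qf_def)
  also have "\<dots> = (\<Sum>x\<in>UNIV. if x = (s, a) then r h s a else 0)"
  proof (rule sum.cong[OF refl])
    fix x :: "'s \<times> 'a"
    show "val r e h (Some x) s a * qf e (Some x) = (if x = (s, a) then r h s a else 0)"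
      using NN_pos[where 's='s and 'a='a] assms by (cases x) (auto simp: val_def vt_def qf_def)
  qed
  also have "\<dots> = r h s a" by simp
  finally show ?thesis .
qed

lemma Dl_zero:
  fixes r :: "nat \<Rightarrow> 's::finite \<Rightarrow> 'a::finite \<Rightarrow> real"
  assumes "0 < e" "e \<le> 1"
  shows "1 - e \<le> (\<integral>w. ind (\<lambda>s a. 0) w \<partial>Dl r e h)"
proof -
  have "(\<integral>w. ind (\<lambda>s a. 0) w \<partial>Dl r e h) = (\<Sum>z\<in>UNIV. ind (\<lambda>s a. 0) (val r e h z) * qf e z)"
    by (rule Dl_integral) (use assms in auto)
  also have "\<dots> = (1 - e) + (\<Sum>x\<in>UNIV. ind (\<lambda>s a. 0) (val r e h (Some x)) * qf e (Some x))"
    by (simp add: sum_option val_def qf_def ind_def)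
  also have "\<dots> \<ge> 1 - e"
    using NN_pos[where 's='s and 'a='a] assms by (intro add_increasing2 sum_nonneg) (auto simp: ind_def qf_def)
  finally show ?thesis .
qed

lemma Dl_hit:
  fixes r :: "nat \<Rightarrow> 's::finite \<Rightarrow> 'a::finite \<Rightarrow> real"
  assumes "0 < e" "e \<le> 1" "0 \<le> r h s a"
  shows "r h s a \<le> (\<integral>w. w s a * ind (vt r e h s a) w \<partial>Dl r e h)"
proof -
  let ?g = "\<lambda>z. val r e h z s a * ind (vt r e h s a) (val r e h z) * qf e z"
  have nn: "0 \<le> ?g z" for z
    using NN_pos[where 's='s and 'a='a] assms
    by (auto simp: val_def vt_def ind_def qf_def split: option.split intro!: mult_nonneg_nonneg divide_nonneg_pos)
  have "(\<integral>w. w s a * ind (vt r e h s a) w \<partial>Dl r e h) = (\<Sum>z\<in>UNIV. ?g z)"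
    by (rule Dl_integral) (use assms in auto)
  also have "\<dots> \<ge> ?g (Some (s, a))"
    by (rule member_le_sum) (use nn in auto)
  also have "?g (Some (s, a)) = r h s a"
    using NN_pos[where 's='s and 'a='a] assms by (simp add: val_def vt_def ind_def qf_def)
  finally show ?thesis by simp
qed

lemma Dl_AE:
  fixes r :: "nat \<Rightarrow> 's::finite \<Rightarrow> 'a::finite \<Rightarrow> real"
  assumes "0 < e" "\<forall>s a. 0 \<le> r h s a"
  shows "AE w in Dl r e h. \<forall>s a. 0 \<le> w s a"
proof -
  have P: "{x \<in> space borel. \<forall>s a. 0 \<le> (x::'s\<Rightarrow>'a\<Rightarrow>real) s a} \<in> sets borel" by measurable
  have f: "val r e h \<in> measurable (measure_pmf (qp e)) borel" by simp
  have "AE z in measure_pmf (qp e). \<forall>s a. 0 \<le> val r e h z s a"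
    using NN_pos[where 's='s and 'a='a] assms
    by (intro AE_I2) (auto simp: val_def vt_def split: option.split)
  then show ?thesis unfolding Dl_def AE_distr_iff[OF f P] .
qed

lemma Dl_in:
  fixes r :: "nat \<Rightarrow> 's::finite \<Rightarrow> 'a::finite \<Rightarrow> real"
  assumes "0 < e" "e \<le> 1" "\<forall>h\<in>{1..H}. \<forall>s a. 0 \<le> r h s a"
  shows "Dl r e \<in> reward_dists H r"
  unfolding reward_dists_def
proof (intro CollectI ballI conjI allI)
  fix h s a assume h: "h \<in> {1..H}"
  show "prob_space (Dl r e h)" by (rule Dl_prob)
  show "sets (Dl r e h) = sets borel" by (rule Dl_sets)
  show "AE R in Dl r e h. \<forall>s a. 0 \<le> R s a" using Dl_AE[OF assms(1)] assms(3) h by blast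
  show "integrable (Dl r e h) (\<lambda>R. R s a)" by (rule Dl_integrable) measurable
  show "(\<integral>R. R s a \<partial>Dl r e h) = r h s a" by (rule Dl_mean[OF assms(1,2)])
qed



definition pat :: "nat \<Rightarrow> nat \<Rightarrow> nat \<Rightarrow> (nat \<Rightarrow> 's::finite \<Rightarrow> 'a::finite \<Rightarrow> real) \<Rightarrow> (nat \<times> 's \<times> 'a) set" where
  "pat L H k W = {(j, s, a). k \<le> j \<and> j \<le> min (k + L - 1) H \<and> W j s a \<noteq> 0}"

definition polS :: "(nat \<Rightarrow> 's::finite \<Rightarrow> 'a::finite \<Rightarrow> real) \<Rightarrow> (nat \<Rightarrow> 's \<Rightarrow> nat \<Rightarrow> 's \<Rightarrow> 'a \<Rightarrow> real)
   \<Rightarrow> nat \<Rightarrow> 's \<Rightarrow> (nat \<times> 's \<times> 'a) set \<Rightarrow> 'a \<Rightarrow> real" where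
  "polS \<pi>0 \<rho> k x S a = (if S = {} then \<pi>0 k x a else
     (let j = Min (fst ` S); p = (SOME p. (j, p) \<in> S) in
      if j = k then (if a = snd p then 1 else 0) else \<rho> j (fst p) k x a))"

definition lpol :: "(nat \<Rightarrow> 's::finite \<Rightarrow> 'a::finite \<Rightarrow> 's \<Rightarrow> real) \<Rightarrow> (nat \<Rightarrow> 's \<Rightarrow> 'a \<Rightarrow> real) \<Rightarrow> nat \<Rightarrow> nat
   \<Rightarrow> nat \<Rightarrow> 's \<Rightarrow> (nat \<Rightarrow> 's \<Rightarrow> 'a \<Rightarrow> real) \<Rightarrow> 'a \<Rightarrow> real" where
  "lpol P \<pi>0 L H k x W a = polS \<pi>0 (\<lambda>j s0. rho P j s0) k x (pat L H k W) a"

lemma polS_dist: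
  assumes "\<And>x a. 0 \<le> \<pi>0 k x a" "\<And>x. (\<Sum>a\<in>UNIV. \<pi>0 k x a) = 1"
  shows "0 \<le> polS \<pi>0 (\<lambda>j s0. rho P j s0) k x S a"
  using assms(1) by (auto simp: polS_def Let_def rho_def)

lemma polS_dist2:
  assumes "\<And>x. (\<Sum>a\<in>UNIV. \<pi>0 k x a) = 1"
  shows "(\<Sum>a\<in>UNIV. polS \<pi>0 (\<lambda>j s0. rho P j s0) k x S a) = 1"
proof (cases "S = {}")
  case True then show ?thesis using assms(1) by (simp add: polS_def)
next
  case False
  define j where "j = Min (fst ` S)"
  define p where "p = (SOME p. (j, p) \<in> S)"
  have "polS \<pi>0 (\<lambda>j s0. rho P j s0) k x S = (\<lambda>a. if j = k then (if a = snd p then 1 else 0) else rho P j (fst p) k x a)"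
    using False by (simp add: polS_def Let_def j_def p_def fun_eq_iff)
  then show ?thesis by (cases "j = k") (simp_all add: rho_def)
qed

lemma pat_window: "pat L H k (window L H k R) = {p \<in> {k..min (k + L - 1) H} \<times> UNIV \<times> UNIV. R (fst p) (fst (snd p)) (snd (snd p)) \<noteq> 0}"
  unfolding pat_def window_def by auto

lemma lpol_meas:
  fixes D :: "nat \<Rightarrow> ('s::finite \<Rightarrow> 'a::finite \<Rightarrow> real) measure"
  assumes k: "k \<in> {1..H}" and sD: "\<forall>j\<in>{1..H}. sets (D j) = sets borel"
  shows "(\<lambda>R. lpol P \<pi>0 L H k x (window L H k R) a) \<in> borel_measurable (reward_law H D)"
proof -
  define M where "M = reward_law H D"
  define Rng where "Rng = {k..min (k + L - 1) H} \<times> (UNIV :: 's set) \<times> (UNIV :: 'a set)"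
  define Bk where "Bk R = {p \<in> Rng. R (fst p) (fst (snd p)) (snd (snd p)) \<noteq> 0}" for R :: "nat \<Rightarrow> 's \<Rightarrow> 'a \<Rightarrow> real"
  have finR: "finite Rng" unfolding Rng_def by simp
  have cm: "(\<lambda>R. R (fst p) (fst (snd p)) (snd (snd p))) \<in> borel_measurable M" if "p \<in> Rng" for p
    unfolding M_def reward_law_def
    by (rule comp_meas) (use that k sD in \<open>auto simp: Rng_def\<close>)
  have gm: "Bk \<in> measurable M (count_space (Pow Rng))"
  proof (subst measurable_count_space_eq2[OF finite_Pow_iff[THEN iffD2, OF finR]], intro conjI ballI)
    show "Bk \<in> space M \<rightarrow> Pow Rng" unfolding Bk_def by auto
    fix \<beta> assume \<beta>: "\<beta> \<in> Pow Rng"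
    have e: "Bk -` {\<beta>} \<inter> space M = {R \<in> space M. \<forall>p\<in>Rng. (R (fst p) (fst (snd p)) (snd (snd p)) \<noteq> 0) = (p \<in> \<beta>)}"
      using \<beta> unfolding Bk_def by auto
    have "Measurable.pred M (\<lambda>R. \<forall>p\<in>Rng. (R (fst p) (fst (snd p)) (snd (snd p)) \<noteq> 0) = (p \<in> \<beta>))"
    proof (rule pred_intros_finite(3)[OF finR])
      fix p assume "p \<in> Rng"
      note cm[OF this, measurable]
      show "Measurable.pred M (\<lambda>R. (R (fst p) (fst (snd p)) (snd (snd p)) \<noteq> 0) = (p \<in> \<beta>))" by measurable
    qed
    then show "Bk -` {\<beta>} \<inter> space M \<in> sets M" unfolding e pred_def by simp
  qed
  have "(\<lambda>R. (\<lambda>S R. polS \<pi>0 (\<lambda>j s0. rho P j s0) k x S a) (Bk R) R) \<in> borel_measurable M"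
    by (rule measurable_compose_countable'[OF _ gm]) (auto intro: countable_finite finR)
  moreover have "lpol P \<pi>0 L H k x (window L H k R) a = polS \<pi>0 (\<lambda>j s0. rho P j s0) k x (Bk R) a" for R
    unfolding lpol_def pat_window Bk_def Rng_def ..
  ultimately show ?thesis unfolding M_def by simp
qed

lemma lpol_in:
  fixes D :: "nat \<Rightarrow> ('s::finite \<Rightarrow> 'a::finite \<Rightarrow> real) measure"
  assumes sD: "\<forall>j\<in>{1..H}. sets (D j) = sets borel"
    and p0: "\<And>k x a. 0 \<le> \<pi>0 k x a" "\<And>k x. (\<Sum>a\<in>UNIV. \<pi>0 k x a) = 1"
  shows "lpol P \<pi>0 L H \<in> lookahead_policies H L D"
  unfolding lookahead_policies_def
proof (intro CollectI conjI ballI allI)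
  fix h s W a
  show "0 \<le> lpol P \<pi>0 L H h s W a" unfolding lpol_def by (rule polS_dist) (use p0 in auto)
  show "(\<Sum>a\<in>UNIV. lpol P \<pi>0 L H h s W a) = 1" unfolding lpol_def by (rule polS_dist2) (use p0 in auto)
next
  fix h s a assume "h \<in> {1..H}"
  then show "(\<lambda>R. lpol P \<pi>0 L H h s (window L H h R) a) \<in> borel_measurable (reward_law H D)"
    by (rule lpol_meas[OF _ sD])
qed



lemma vt_nz:
  fixes r :: "nat \<Rightarrow> 's::finite \<Rightarrow> 'a::finite \<Rightarrow> real"
  assumes "0 < e" "0 < r h s0 a0"
  shows "vt r e h s0 a0 s a \<noteq> 0 \<longleftrightarrow> (s = s0 \<and> a = a0)"
  using assms NN_pos[where 's='s and 'a='a] by (auto simp: vt_def)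

lemma pat_event:
  fixes r :: "nat \<Rightarrow> 's::finite \<Rightarrow> 'a::finite \<Rightarrow> real"
  assumes e: "0 < e" and rp: "0 < r h s0 a0" and h: "h \<in> {1..H}"
    and Rh: "R h = vt r e h s0 a0" and Ri: "\<forall>i\<in>{1..H} - {h}. R i = (\<lambda>s a. 0)"
    and k: "k \<in> {1..H}"
  shows "pat L H k (window L H k R) = (if k \<le> h \<and> h \<le> min (k + L - 1) H then {(h, s0, a0)} else {})"
proof -
  have "pat L H k (window L H k R) = {p \<in> {k..min (k + L - 1) H} \<times> UNIV \<times> UNIV. R (fst p) (fst (snd p)) (snd (snd p)) \<noteq> 0}"
    by (rule pat_window)
  also have "\<dots> = (if k \<le> h \<and> h \<le> min (k + L - 1) H then {(h, s0, a0)} else {})"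
  proof -
    have "R j s a \<noteq> 0 \<longleftrightarrow> (j = h \<and> s = s0 \<and> a = a0)" if "j \<in> {k..min (k + L - 1) H}" for j s a
    proof (cases "j = h")
      case True then show ?thesis using Rh e rp NN_pos[where 's='s and 'a='a] by (auto simp: vt_def)
    next
      case False
      then have "j \<in> {1..H} - {h}" using that k by auto
      then show ?thesis using Ri False by auto
    qed
    note key = this
    define X where "X = {p \<in> {k..min (k + L - 1) H} \<times> UNIV \<times> UNIV. R (fst p) (fst (snd p)) (snd (snd p)) \<noteq> 0}"
    have "X = (if k \<le> h \<and> h \<le> min (k + L - 1) H then {(h, s0, a0)} else {})"
    proof (cases "k \<le> h \<and> h \<le> min (k + L - 1) H")
      case True
      have A: "(h, s0, a0) \<in> X" unfolding X_def using key[of h s0 a0] True by auto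
      have B: "p = (h, s0, a0)" if "p \<in> X" for p
      proof -
        obtain j s a where p: "p = (j, s, a)" using prod_cases3 by blast
        have "j \<in> {k..min (k + L - 1) H}" "R j s a \<noteq> 0" using that unfolding X_def p by auto
        then show ?thesis using key[of j s a] p by auto
      qed
      have "X = {(h, s0, a0)}" using A B by blast
      then show ?thesis by (simp only: if_P[OF True])
    next
      case False
      have B: "p \<notin> X" for p
      proof
        assume "p \<in> X"
        obtain j s a where p: "p = (j, s, a)" using prod_cases3 by blast
        have "j \<in> {k..min (k + L - 1) H}" "R j s a \<noteq> 0" using \<open>p \<in> X\<close> unfolding X_def p by auto
        then have "j = h" using key[of j s a] by auto
        then show False using False \<open>j \<in> {k..min (k + L - 1) H}\<close> by simp
      qed
      have "X = {}" using B by auto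
      then show ?thesis by (simp only: if_not_P[OF False])
    qed
    then show ?thesis unfolding X_def .
  qed
  finally show ?thesis .
qed

lemma lpol_event:
  fixes r :: "nat \<Rightarrow> 's::finite \<Rightarrow> 'a::finite \<Rightarrow> real"
  assumes e: "0 < e" and rp: "0 < r h s0 a0" and h: "h \<in> {1..H}"
    and Rh: "R h = vt r e h s0 a0" and Ri: "\<forall>i\<in>{1..H} - {h}. R i = (\<lambda>s a. 0)"
    and k: "k \<in> {1..H}"
  shows "lpol P \<pi>0 L H k x (window L H k R) a =
     (if k \<le> h \<and> h \<le> min (k + L - 1) H then (if h = k then (if a = a0 then 1 else 0) else rho P h s0 k x a) else \<pi>0 k x a)"
proof (cases "k \<le> h \<and> h \<le> min (k + L - 1) H")
  case True
  then have S: "pat L H k (window L H k R) = {(h, s0, a0)}" using pat_event[OF assms] by simp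
  have "(SOME p. (h, p) \<in> {(h, s0, a0)}) = (s0, a0)" by simp
  then show ?thesis using True unfolding lpol_def polS_def S by (simp add: Let_def)
next
  case False
  then have S: "pat L H k (window L H k R) = {}" using pat_event[OF assms] by simp
  have "lpol P \<pi>0 L H k x (window L H k R) a = \<pi>0 k x a" unfolding lpol_def polS_def S by simp
  then show ?thesis by (simp only: False if_False)
qed

lemma flow_event:
  fixes r :: "nat \<Rightarrow> 's::finite \<Rightarrow> 'a::finite \<Rightarrow> real"
  assumes e: "0 < e" and rp: "0 < r h s0 a0" and h: "h \<in> {1..H}"
    and Rh: "R h = vt r e h s0 a0" and Ri: "\<forall>i\<in>{1..H} - {h}. R i = (\<lambda>s a. 0)"
    and L1: "1 \<le> L"
    and P_nonneg: "\<forall>h\<in>{1..H}. \<forall>s a s'. 0 \<le> P h s a s'"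
  shows "flow P (\<lambda>k x. lpol P \<pi>0 L H k x (window L H k R)) 1 mu (h - 1) s0
     = (\<Sum>s'\<in>UNIV. occ P mu \<pi>0 (tL L h) s' * dstar P H (tL L h) s' h s0)"
proof -
  define t where "t = tL L h"
  define dd where "dd = (\<lambda>k x. lpol P \<pi>0 L H k x (window L H k R))"
  have t: "1 \<le> t" "t \<le> h" "h \<le> H" using h L1 by (auto simp: t_def tL_def)
  have ev: "dd k x a = (if k \<le> h \<and> h \<le> min (k + L - 1) H then (if h = k then (if a = a0 then 1 else 0) else rho P h s0 k x a) else \<pi>0 k x a)"
    if "k \<in> {1..H}" for k x a
    unfolding dd_def by (rule lpol_event[OF e rp h Rh Ri that])
  have "flow P dd 1 mu (h - 1) s0 = (\<Sum>x\<in>UNIV. flow P dd 1 mu (t - 1) x * cocc P dd t x h s0)"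
    by (rule flow_split) (use t in auto)
  also have "\<dots> = (\<Sum>x\<in>UNIV. occ P mu \<pi>0 t x * dstar P H t x h s0)"
  proof (rule sum.cong[OF refl])
    fix x
    have "flow P dd 1 mu (t - 1) = flow P \<pi>0 1 mu (t - 1)"
    proof (rule flow_cong)
      fix k assume k: "k < t - 1"
      have "\<not> (1 + k \<le> h \<and> h \<le> min (1 + k + L - 1) H)" using k L1 by (auto simp: t_def tL_def)
      moreover have "1 + k \<in> {1..H}" using k t by auto
      ultimately show "dd (1 + k) = \<pi>0 (1 + k)" using ev by (auto simp: fun_eq_iff)
    qed
    moreover have "cocc P dd t x h s0 = cocc P (rho P h s0) t x h s0"
      unfolding cocc_def
    proof (rule fun_cong[OF flow_cong])
      fix k assume k: "k < h - t"
      have "t + k \<le> h \<and> h \<le> min (t + k + L - 1) H" "h \<noteq> t + k" using k t L1 by (auto simp: t_def tL_def)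
      moreover have "t + k \<in> {1..H}" using k t by auto
      ultimately show "dd (t + k) = rho P h s0 (t + k)" using ev by (auto simp: fun_eq_iff)
    qed
    moreover have "cocc P (rho P h s0) t x h s0 = dstar P H t x h s0"
      using cocc_rho[OF t(2)] dstar_eq[OF t P_nonneg] by simp
    ultimately show "flow P dd 1 mu (t - 1) x * cocc P dd t x h s0 = occ P mu \<pi>0 t x * dstar P H t x h s0"
      by (simp add: occ_def)
  qed
  finally show ?thesis unfolding dd_def t_def .
qed



lemma pi0_dist: "0 \<le> pi0 P H L r k x a" "(\<Sum>a\<in>UNIV. pi0 P H L r k x a) = 1"
  unfolding pi0_def pistar_def by simp_all

lemma LB:
  fixes P :: "nat \<Rightarrow> 's::finite \<Rightarrow> 'a::finite \<Rightarrow> 's \<Rightarrow> real"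
    and mu :: "'s \<Rightarrow> real" and r :: "nat \<Rightarrow> 's \<Rightarrow> 'a \<Rightarrow> real"
  assumes P_nonneg: "\<forall>h\<in>{1..H}. \<forall>s a s'. 0 \<le> P h s a s'"
    and P_sum: "\<forall>h\<in>{1..H}. \<forall>s a. (\<Sum>s'\<in>UNIV. P h s a s') = 1"
    and mu_nonneg: "\<forall>s. 0 \<le> mu s"
    and mu_sum: "(\<Sum>s\<in>UNIV. mu s) = 1"
    and r_nonneg: "\<forall>h\<in>{1..H}. \<forall>s a. 0 \<le> r h s a"
    and L1: "1 \<le> L" and LH: "L \<le> H"
    and e: "0 < e" "e < 1"
  shows "(1 - e) ^ (H - 1) * Jv P mu H L r (pi0 P H L r) \<le> lookahead_value P mu H L (Dl r e) (lpol P (pi0 P H L r) L H)"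
proof -
  define I where "I = {1..H}"
  have finI: "finite I" by (simp add: I_def)
  define D where "D = Dl r e"
  have pD: "prob_space (D i)" for i unfolding D_def by (rule Dl_prob)
  interpret product_prob_space D
    by (simp add: product_prob_space_def product_prob_space_axioms_def product_sigma_finite_def pD prob_space_imp_sigma_finite)
  define M where "M = reward_law H D"
  have MM: "M = PiM I D" unfolding M_def reward_law_def I_def ..
  have pM: "prob_space M" unfolding MM by (rule prob_space_PiM) (simp add: pD)
  define \<pi>0 where "\<pi>0 = pi0 P H L r"
  define pol where "pol = lpol P \<pi>0 L H"
  have sD: "\<forall>j\<in>{1..H}. sets (D j) = sets borel" unfolding D_def by (simp add: Dl_sets)
  have polin: "pol \<in> lookahead_policies H L D"
    unfolding pol_def by (rule lpol_in[OF sD]) (simp_all add: \<pi>0_def pi0_dist)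
  define dd where "dd R = (\<lambda>h s. pol h s (window L H h R))" for R
  have mk: "markov_policy H (dd R)" for R
    using polin unfolding lookahead_policies_def markov_policy_def dd_def by auto
  have dmeas: "\<forall>k\<in>{1..H}. \<forall>x a. (\<lambda>R. dd R k x a) \<in> borel_measurable M"
    using polin unfolding lookahead_policies_def dd_def M_def by auto
  have cm: "(\<lambda>R. R j s a) \<in> borel_measurable M" if "j \<in> I" for j s a
    unfolding M_def reward_law_def by (rule comp_meas) (use that sD in \<open>auto simp: I_def\<close>)
  define f where "f R = (\<Sum>h\<in>I. \<Sum>s\<in>UNIV. \<Sum>a\<in>UNIV. flow P (dd R) 1 mu (h - 1) s * dd R h s a * R h s a)" for R
  have val: "lookahead_value P mu H L (Dl r e) (lpol P (pi0 P H L r) L H) = (\<integral>R. f R \<partial>M)"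
    unfolding lookahead_value_def Let_def f_def dd_def M_def I_def pol_def \<pi>0_def D_def ..
  have fl_b: "0 \<le> flow P (dd R) 1 mu (h - 1) s" "flow P (dd R) 1 mu (h - 1) s \<le> 1" if "h \<in> I" for h s R
    using flow_bounds[OF mk _ mu_nonneg mu_sum P_nonneg P_sum, of "h - 1" R s] that by (auto simp: I_def)
  have dd_b: "0 \<le> dd R h s a" "dd R h s a \<le> 1" if "h \<in> I" for h s a R
    using markov_nn[OF mk, of h R s a] markov_le1[OF mk, of h R s a] that by (auto simp: I_def)
  have iR: "integrable M (\<lambda>R. R h s a)" if "h \<in> I" for h s a
  proof -
    have "integrable (PiM I D) (\<lambda>R. R h s a * (\<lambda>_. 1::real) R)"
      by (rule indep_integrable[OF pD finI that, where B=1]) (auto simp: D_def intro!: Dl_integrable)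
    then show ?thesis by (simp add: MM)
  qed
  have fm: "f \<in> borel_measurable M"
    unfolding f_def
    by (intro borel_measurable_sum borel_measurable_times flow_meas[OF dmeas]) (use dmeas cm in \<open>auto simp: I_def\<close>)
  have intf: "integrable M f"
  proof (rule Bochner_Integration.integrable_bound[where f="\<lambda>R. \<Sum>h\<in>I. \<Sum>s\<in>UNIV. \<Sum>a\<in>UNIV. \<bar>R h s a\<bar>"])
    show "integrable M (\<lambda>R. \<Sum>h\<in>I. \<Sum>s\<in>UNIV. \<Sum>a\<in>UNIV. \<bar>R h s a\<bar>)"
      by (intro Bochner_Integration.integrable_sum Bochner_Integration.integrable_abs iR)
    show "f \<in> borel_measurable M" by (rule fm)
    show "AE R in M. norm (f R) \<le> norm (\<Sum>h\<in>I. \<Sum>s\<in>UNIV. \<Sum>a\<in>UNIV. \<bar>R h s a\<bar>)"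
    proof (rule AE_I2)
      fix R
      have "\<bar>f R\<bar> \<le> (\<Sum>h\<in>I. \<Sum>s\<in>UNIV. \<Sum>a\<in>UNIV. \<bar>flow P (dd R) 1 mu (h - 1) s * dd R h s a * R h s a\<bar>)"
        unfolding f_def by (intro order_trans[OF sum_abs] sum_mono order_trans[OF sum_abs]) simp
      also have "\<dots> \<le> (\<Sum>h\<in>I. \<Sum>s\<in>UNIV. \<Sum>a\<in>UNIV. \<bar>R h s a\<bar>)"
      proof (intro sum_mono)
        fix h s a assume h: "h \<in> I"
        have A: "0 \<le> flow P (dd R) 1 mu (h - 1) s" "flow P (dd R) 1 mu (h - 1) s \<le> 1"
          by (rule fl_b[OF h])+
        have B: "0 \<le> dd R h s a" "dd R h s a \<le> 1" by (rule dd_b[OF h])+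
        have "\<bar>flow P (dd R) 1 mu (h - 1) s * dd R h s a\<bar> \<le> 1"
          using A B by (simp add: abs_mult mult_le_one)
        then show "\<bar>flow P (dd R) 1 mu (h - 1) s * dd R h s a * R h s a\<bar> \<le> \<bar>R h s a\<bar>"
          by (simp add: abs_mult mult_left_le_one_le)
      qed
      finally show "norm (f R) \<le> norm (\<Sum>h\<in>I. \<Sum>s\<in>UNIV. \<Sum>a\<in>UNIV. \<bar>R h s a\<bar>)" by simp
    qed
  qed
  define cc where "cc h s = (\<Sum>s'\<in>UNIV. occ P mu \<pi>0 (tL L h) s' * dstar P H (tL L h) s' h s)" for h s
  define Fi where "Fi h s a i w = (if i = h then w s a * ind (vt r e h s a) w else ind (\<lambda>s a. 0) w)"
    for h s a i and w :: "'s \<Rightarrow> 'a \<Rightarrow> real"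
  define g where "g R = (\<Sum>h\<in>I. \<Sum>s\<in>UNIV. \<Sum>a\<in>UNIV. cc h s * (\<Prod>i\<in>I. Fi h s a i (R i)))" for R
  have Fim: "Fi h s a i \<in> borel_measurable borel" for h s a i
    unfolding Fi_def by measurable
  have iFi: "integrable (D i) (Fi h s a i)" for h s a i
    unfolding D_def by (rule Dl_integrable[OF Fim])
  have ig: "integrable M (\<lambda>R. cc h s * (\<Prod>i\<in>I. Fi h s a i (R i)))" for h s a
  proof -
    have "integrable (PiM I D) (\<lambda>R. \<Prod>i\<in>I. Fi h s a i (R i))"
      by (rule product_integrable_prod[OF finI iFi])
    then show ?thesis unfolding MM by simp
  qed
  have intg: "integrable M g"
    unfolding g_def by (intro Bochner_Integration.integrable_sum ig)
  have int_g: "(\<integral>R. g R \<partial>M) = (\<Sum>h\<in>I. \<Sum>s\<in>UNIV. \<Sum>a\<in>UNIV. cc h s * (\<Prod>i\<in>I. \<integral>w. Fi h s a i w \<partial>D i))"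
  proof -
    have "(\<integral>R. g R \<partial>M) = (\<Sum>h\<in>I. \<Sum>s\<in>UNIV. \<Sum>a\<in>UNIV. \<integral>R. cc h s * (\<Prod>i\<in>I. Fi h s a i (R i)) \<partial>M)"
      unfolding g_def using ig by (simp add: Bochner_Integration.integral_sum Bochner_Integration.integrable_sum)
    also have "\<dots> = (\<Sum>h\<in>I. \<Sum>s\<in>UNIV. \<Sum>a\<in>UNIV. cc h s * (\<Prod>i\<in>I. \<integral>w. Fi h s a i w \<partial>D i))"
      unfolding MM by (simp add: product_integral_prod[OF finI iFi])
    finally show ?thesis .
  qed
  have tr: "tL L h \<in> {1..H}" "tL L h \<le> h" if "h \<in> I" for h
    using tL_range(1)[OF L1, of h H] tL_range(2)[OF L1, of h] that by (auto simp: I_def)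
  have cc_nn: "0 \<le> cc h s" if h: "h \<in> I" for h s
    unfolding cc_def occ_def
  proof (intro sum_nonneg mult_nonneg_nonneg)
    fix s'
    show "0 \<le> flow P \<pi>0 1 mu (tL L h - 1) s'"
      by (rule flow_bounds(1)[OF markov_pistar[of H P "gfun P H L r", folded pi0_def, folded \<pi>0_def] _ mu_nonneg mu_sum P_nonneg P_sum]) (use tr[OF h] in auto)
    show "0 \<le> dstar P H (tL L h) s' h s"
      by (rule dstar_nonneg[OF _ _ _ P_nonneg]) (use tr[OF h] h in \<open>auto simp: I_def\<close>)
  qed
  have card1: "card (I - {h}) = H - 1" if "h \<in> I" for h using that by (simp add: I_def)
  have prodlb: "r h s a * (1 - e) ^ (H - 1) \<le> (\<Prod>i\<in>I. \<integral>w. Fi h s a i w \<partial>D i)" if h: "h \<in> I" for h s a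
  proof -
    have rnn: "0 \<le> r h s a" using r_nonneg h by (auto simp: I_def)
    have "(\<Prod>i\<in>I. \<integral>w. Fi h s a i w \<partial>D i) = (\<integral>w. Fi h s a h w \<partial>D h) * (\<Prod>i\<in>I - {h}. \<integral>w. Fi h s a i w \<partial>D i)"
      by (rule prod.remove[OF finI h])
    moreover have A: "r h s a \<le> (\<integral>w. Fi h s a h w \<partial>D h)"
      unfolding Fi_def D_def using Dl_hit[where e=e and h=h and r=r and s=s and a=a] e rnn by simp
    moreover have B: "(1 - e) ^ (H - 1) \<le> (\<Prod>i\<in>I - {h}. \<integral>w. Fi h s a i w \<partial>D i)"
    proof -
      have "(\<Prod>i\<in>I - {h}. (1 - e)) \<le> (\<Prod>i\<in>I - {h}. \<integral>w. Fi h s a i w \<partial>D i)"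
      proof (rule prod_mono)
        fix i assume i: "i \<in> I - {h}"
        have "1 - e \<le> (\<integral>w. Fi h s a i w \<partial>D i)"
          using i Dl_zero[where e=e and r=r and h=i] e unfolding Fi_def D_def by simp
        then show "0 \<le> 1 - e \<and> 1 - e \<le> (\<integral>w. Fi h s a i w \<partial>D i)" using e by simp
      qed
      then show ?thesis using card1[OF h] by simp
    qed
    ultimately show ?thesis
      using rnn e by (simp add: mult_mono)
  qed
  have Jv_cc: "Jv P mu H L r \<pi>0 = (\<Sum>h\<in>I. \<Sum>s\<in>UNIV. \<Sum>a\<in>UNIV. r h s a * cc h s)"
    unfolding Jv_def cc_def I_def ..
  have low: "(1 - e) ^ (H - 1) * Jv P mu H L r \<pi>0 \<le> (\<integral>R. g R \<partial>M)"
    unfolding int_g Jv_cc sum_distrib_left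
  proof (intro sum_mono)
    fix h s a assume h: "h \<in> I"
    have "(1 - e) ^ (H - 1) * (r h s a * cc h s) = cc h s * (r h s a * (1 - e) ^ (H - 1))" by simp
    also have "\<dots> \<le> cc h s * (\<Prod>i\<in>I. \<integral>w. Fi h s a i w \<partial>D i)"
      by (rule mult_left_mono[OF prodlb[OF h] cc_nn[OF h]])
    finally show "(1 - e) ^ (H - 1) * (r h s a * cc h s) \<le> cc h s * (\<Prod>i\<in>I. \<integral>w. Fi h s a i w \<partial>D i)" .
  qed
  have AEnn: "AE R in M. \<forall>i\<in>I. \<forall>s a. 0 \<le> R i s a"
  proof (rule AE_finite_allI[OF finI])
    fix h assume h: "h \<in> I"
    have aeh: "AE w in D h. \<forall>s a. 0 \<le> w s a"
      unfolding D_def by (rule Dl_AE[OF e(1)]) (use r_nonneg h in \<open>auto simp: I_def\<close>)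
    have pp: "\<And>i. i \<in> I \<Longrightarrow> prob_space (D i)" by (rule pD)
    show "AE R in M. \<forall>s a. 0 \<le> R h s a"
      unfolding MM using AE_PiM_component[where M=D and I=I and i=h, OF pp h aeh] by simp
  qed
  have gf: "g R \<le> f R" if nn: "\<forall>i\<in>I. \<forall>s a. 0 \<le> R i s a" for R
    unfolding g_def f_def
  proof (rule sum_mono, rule sum_mono, rule sum_mono)
    fix h and s :: 's and a :: 'a assume h: "h \<in> I" and "s \<in> UNIV" and "a \<in> UNIV"
    have rhs_nn: "0 \<le> flow P (dd R) 1 mu (h - 1) s * dd R h s a * R h s a"
      using fl_b(1)[OF h] dd_b(1)[OF h] nn h by (intro mult_nonneg_nonneg) auto
    have pr: "(\<Prod>i\<in>I. Fi h s a i (R i)) = Fi h s a h (R h) * (\<Prod>i\<in>I - {h}. Fi h s a i (R i))"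
      by (rule prod.remove[OF finI h])
    show "cc h s * (\<Prod>i\<in>I. Fi h s a i (R i)) \<le> flow P (dd R) 1 mu (h - 1) s * dd R h s a * R h s a"
    proof (cases "R h = vt r e h s a \<and> (\<forall>i\<in>I - {h}. R i = (\<lambda>s a. 0))")
      case True
      then have Rh: "R h = vt r e h s a" and Ri: "\<forall>i\<in>{1..H} - {h}. R i = (\<lambda>s a. 0)" by (auto simp: I_def)
      have "(\<Prod>i\<in>I - {h}. Fi h s a i (R i)) = 1"
        using Ri by (intro prod.neutral) (auto simp: Fi_def ind_def I_def)
      then have P1: "(\<Prod>i\<in>I. Fi h s a i (R i)) = R h s a" unfolding pr by (simp add: Fi_def ind_def Rh)
      show ?thesis
      proof (cases "0 < r h s a")
        case rp: True
        have hI: "h \<in> {1..H}" using h by (simp add: I_def)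
        have fe: "flow P (dd R) 1 mu (h - 1) s = cc h s"
          unfolding dd_def pol_def cc_def by (rule flow_event[OF e(1) rp hI Rh Ri L1 P_nonneg])
        have "dd R h s a = 1"
          unfolding dd_def pol_def using lpol_event[OF e(1) rp hI Rh Ri hI, of P \<pi>0 L s a] L1 hI by simp
        then show ?thesis using P1 fe by simp
      next
        case False
        have "0 \<le> r h s a" using r_nonneg h by (auto simp: I_def)
        then have "r h s a = 0" using False by linarith
        then have "R h s a = 0" using Rh by (simp add: vt_def)
        then show ?thesis using P1 rhs_nn by simp
      qed
    next
      case False
      have "(\<Prod>i\<in>I. Fi h s a i (R i)) = 0"
      proof (cases "R h = vt r e h s a")
        case True
        then obtain i where i: "i \<in> I - {h}" "R i \<noteq> (\<lambda>s a. 0)" using False by blast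
        have "Fi h s a i (R i) = 0" using i by (simp add: Fi_def ind_def)
        then show ?thesis using i finI by (intro prod_zero) auto
      next
        case False
        then show ?thesis unfolding pr by (simp add: Fi_def ind_def)
      qed
      then show ?thesis using rhs_nn by simp
    qed
  qed
  have "(\<integral>R. g R \<partial>M) \<le> (\<integral>R. f R \<partial>M)"
    by (rule integral_mono_AE[OF intg intf]) (use AEnn gf in auto)
  then show ?thesis using low val by (simp add: \<pi>0_def)
qed


theorem proposition1:
  fixes P :: "nat \<Rightarrow> 's::finite \<Rightarrow> 'a::finite \<Rightarrow> 's \<Rightarrow> real"
    and mu :: "'s \<Rightarrow> real"
    and r :: "nat \<Rightarrow> 's \<Rightarrow> 'a \<Rightarrow> real"
    and H L :: nat
  assumes P_nonneg: "\<forall>h\<in>{1..H}. \<forall>s a s'. 0 \<le> P h s a s'"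
    and P_sum: "\<forall>h\<in>{1..H}. \<forall>s a. (\<Sum>s'\<in>UNIV. P h s a s') = 1"
    and mu_nonneg: "\<forall>s. 0 \<le> mu s"
    and mu_sum: "(\<Sum>s\<in>UNIV. mu s) = 1"
    and r_nonneg: "\<forall>h\<in>{1..H}. \<forall>s a. 0 \<le> r h s a"
    and L_range: "1 \<le> L" "L \<le> H"
  shows "\<exists>\<pi>0. markov_policy H \<pi>0 \<and>
    (\<forall>\<pi>. markov_policy H \<pi> \<longrightarrow>
       (\<Sum>h\<in>{1..H}. \<Sum>s\<in>UNIV. \<Sum>a\<in>UNIV. r h s a *
          (\<Sum>s'\<in>UNIV. occ P mu \<pi> (tL L h) s' * dstar P H (tL L h) s' h s))
       \<le> (\<Sum>h\<in>{1..H}. \<Sum>s\<in>UNIV. \<Sum>a\<in>UNIV. r h s a *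
          (\<Sum>s'\<in>UNIV. occ P mu \<pi>0 (tL L h) s' * dstar P H (tL L h) s' h s))) \<and>
    (SUP D\<in>reward_dists H r. opt_lookahead_value P mu H L D) =
      ereal (\<Sum>h\<in>{1..H}. \<Sum>s\<in>UNIV. \<Sum>a\<in>UNIV. r h s a *
          (\<Sum>s'\<in>UNIV. occ P mu \<pi>0 (tL L h) s' * dstar P H (tL L h) s' h s))"
proof -
  define \<pi>0 where "\<pi>0 = pi0 P H L r"
  define J where "J = Jv P mu H L r \<pi>0"
  have mk0: "markov_policy H \<pi>0"
    unfolding \<pi>0_def pi0_def by (rule markov_pistar)
  have opt: "Jv P mu H L r \<pi> \<le> J" if "markov_policy H \<pi>" for \<pi>
    unfolding J_def \<pi>0_def by (rule Jv_opt[OF L_range(1) that _ P_nonneg]) (use mu_nonneg in auto)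
  have J0: "0 \<le> J" unfolding J_def
    by (rule Jv_nonneg[OF mk0 L_range(1) mu_nonneg mu_sum P_nonneg P_sum r_nonneg])
  have le: "(SUP D\<in>reward_dists H r. opt_lookahead_value P mu H L D) \<le> ereal J"
  proof (rule SUP_least)
    fix D assume D: "D \<in> reward_dists H r"
    show "opt_lookahead_value P mu H L D \<le> ereal J"
      unfolding opt_lookahead_value_def
    proof (rule SUP_least)
      fix pol assume pol: "pol \<in> lookahead_policies H L D"
      show "ereal (lookahead_value P mu H L D pol) \<le> ereal J"
        using UB[OF P_nonneg P_sum mu_nonneg mu_sum r_nonneg L_range D pol] by (simp add: J_def \<pi>0_def)
    qed
  qed
  have ge: "ereal J \<le> (SUP D\<in>reward_dists H r. opt_lookahead_value P mu H L D)"
  proof (rule ereal_le_epsilon2)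
    fix \<delta> :: real assume d: "0 < \<delta>"
    define e where "e = min (1/2) (\<delta> / (real H * J + 1))"
    have pos: "0 < real H * J + 1" using J0 by (intro add_nonneg_pos mult_nonneg_nonneg) auto
    have e0: "0 < e" "e < 1" using d pos by (auto simp: e_def)
    have eb: "e * (real H * J + 1) \<le> \<delta>"
    proof -
      have "e \<le> \<delta> / (real H * J + 1)" by (simp add: e_def)
      then show ?thesis using pos by (simp add: field_simps)
    qed
    have bern: "1 + real (H - 1) * (- e) \<le> (1 + (- e)) ^ (H - 1)"
      by (rule Bernoulli_inequality) (use e0 in auto)
    have "J - \<delta> \<le> (1 - e) ^ (H - 1) * J"
    proof -
      have "J - \<delta> \<le> J - e * (real H * J)" using eb e0 by (simp add: algebra_simps)
      also have "\<dots> \<le> J - e * (real (H - 1) * J)"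
        using e0 J0 by (intro diff_left_mono mult_left_mono mult_right_mono) auto
      also have "\<dots> = (1 + real (H - 1) * (- e)) * J" by (simp add: algebra_simps)
      also have "\<dots> \<le> (1 - e) ^ (H - 1) * J" using bern J0 by (intro mult_right_mono) auto
      finally show ?thesis .
    qed
    also have "\<dots> \<le> lookahead_value P mu H L (Dl r e) (lpol P \<pi>0 L H)"
      unfolding J_def \<pi>0_def by (rule LB[OF P_nonneg P_sum mu_nonneg mu_sum r_nonneg L_range e0])
    finally have v: "J - \<delta> \<le> lookahead_value P mu H L (Dl r e) (lpol P \<pi>0 L H)" .
    have Din: "Dl r e \<in> reward_dists H r" using Dl_in[OF e0(1) _ r_nonneg] e0 by simp
    have polin: "lpol P \<pi>0 L H \<in> lookahead_policies H L (Dl r e)"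
      by (rule lpol_in) (simp_all add: Dl_sets \<pi>0_def pi0_dist)
    have "ereal (lookahead_value P mu H L (Dl r e) (lpol P \<pi>0 L H)) \<le> opt_lookahead_value P mu H L (Dl r e)"
      unfolding opt_lookahead_value_def by (rule SUP_upper[OF polin])
    also have "\<dots> \<le> (SUP D\<in>reward_dists H r. opt_lookahead_value P mu H L D)"
      by (rule SUP_upper[OF Din])
    finally have "ereal (J - \<delta>) \<le> (SUP D\<in>reward_dists H r. opt_lookahead_value P mu H L D)"
      using v by (meson ereal_less_eq(3) order_trans)
    then have "ereal (J - \<delta>) + ereal \<delta> \<le> (SUP D\<in>reward_dists H r. opt_lookahead_value P mu H L D) + ereal \<delta>"
      by (rule add_right_mono)
    then show "ereal J \<le> (SUP D\<in>reward_dists H r. opt_lookahead_value P mu H L D) + ereal \<delta>"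
      by simp
  qed
  have eq: "(SUP D\<in>reward_dists H r. opt_lookahead_value P mu H L D) = ereal J"
    using le ge by (rule antisym)
  show ?thesis
  proof (rule exI[of _ \<pi>0], intro conjI allI impI)
    show "markov_policy H \<pi>0" by (rule mk0)
    fix \<pi> :: "nat \<Rightarrow> 's \<Rightarrow> 'a \<Rightarrow> real" assume "markov_policy H \<pi>"
    then show "(\<Sum>h\<in>{1..H}. \<Sum>s\<in>UNIV. \<Sum>a\<in>UNIV. r h s a *
          (\<Sum>s'\<in>UNIV. occ P mu \<pi> (tL L h) s' * dstar P H (tL L h) s' h s))
       \<le> (\<Sum>h\<in>{1..H}. \<Sum>s\<in>UNIV. \<Sum>a\<in>UNIV. r h s a *
          (\<Sum>s'\<in>UNIV. occ P mu \<pi>0 (tL L h) s' * dstar P H (tL L h) s' h s))"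
      using opt unfolding J_def Jv_def by blast
  next
    show "(SUP D\<in>reward_dists H r. opt_lookahead_value P mu H L D) =
      ereal (\<Sum>h\<in>{1..H}. \<Sum>s\<in>UNIV. \<Sum>a\<in>UNIV. r h s a *
          (\<Sum>s'\<in>UNIV. occ P mu \<pi>0 (tL L h) s' * dstar P H (tL L h) s' h s))"
      using eq unfolding J_def Jv_def .
  qed
qed



end
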